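(* Let ${\cal O}$ be the union of some of the sets $A^mB^n$, including $A$ and $B$. Then, the set $Q^{\cal O}$ of ${\cal O}$-positive distributions is closed under wirings.
   Context: Bipartite Bell scenario: Alice (Bob) feeds an input $x$ ($y$) from a finite alphabet and receives an output $a$ ($b$) from a finite alphabet; a box is a no-signalling distribution $P(a,b|x,y)$. Assign symbolic projectors $E^x_a$ (Alice) and $F^y_b$ (Bob) to each local event $(x,a)$, $(y,b)$; $A$ and $B$ denote the sets of Alice's and Bob's projectors. They can be conjugated and multiplied formally, every $F$ commutes with every $E$, and a product of two consecutive projectors corresponding to different outcomes of the same measurement equals 0. $A^mB^n$ denotes the set of all products $E^{x_1}_{a_1}\cdots E^{x_{m'}}_{a_{m'}}F^{y_1}_{b_1}\cdots F^{y_{n'}}_{b_{n'}}$ with $m'\leq m$, $n'\leq n$ (taking $m'=n'=0$ gives the identity $1$). ${\cal O}$ is a (symmetric) union of sets of this type containing $A$ and $B$; $\overline{{\cal O}}$ is the real span of ${\cal O}$ and $\overline{{\cal O}}^2$ the real span of products of two elements of ${\cal O}$. A no-signalling distribution $P(a,b|x,y)$ is ${\cal O}$-positive if there exists a linear functional $L:\overline{{\cal O}}^2\to\mathbb{R}$ with $L(1)=1$, $L(ff^\dagger)\geq 0$ for all $f\in\overline{{\cal O}}$, and $P(a,b|x,y)=L(E^x_aF^y_b)$. A set of boxes is closed under wirings if, for any finite collection of boxes from the set and any pair of local wirings (each party sequentially chooses which of its local boxes to probe and with which input as a function of its effective input and previously obtained outputs, and then post-processes the obtained outputs into an effective output), the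 resulting effective box belongs to the set. *)

theory Defs
  imports Complex_Main
begin

text \<open>A bipartite scenario: Alice's inputs are 0..<nX, outputs 0..<nA;
  Bob's inputs 0..<nY, outputs 0..<nB (all alphabets finite and nonempty).
  A box is P a b x y = P(a,b|x,y).\<close>

definition is_box :: "nat \<Rightarrow> nat \<Rightarrow> nat \<Rightarrow> nat \<Rightarrow> (nat \<Rightarrow> nat \<Rightarrow> nat \<Rightarrow> nat \<Rightarrow> real) \<Rightarrow> bool" where
  "is_box nX nA nY nB P \<longleftrightarrow>
     0 < nX \<and> 0 < nA \<and> 0 < nY \<and> 0 < nB \<and>
     (\<forall>a<nA. \<forall>b<nB. \<forall>x<nX. \<forall>y<nY. 0 \<le> P a b x y) \<and>
     (\<forall>x<nX. \<forall>y<nY. (\<Sum>a<nA. \<Sum>b<nB. P a b x y) = 1) \<and>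
     (\<forall>a<nA. \<forall>x<nX. \<forall>y<nY. \<forall>y'<nY. (\<Sum>b<nB. P a b x y) = (\<Sum>b<nB. P a b x y')) \<and>
     (\<forall>b<nB. \<forall>y<nY. \<forall>x<nX. \<forall>x'<nX. (\<Sum>a<nA. P a b x y) = (\<Sum>a<nA. P a b x' y))"

text \<open>A letter (x,a) stands for E^x_a (resp. (y,b) for F^y_b).  Since every F commutes
  with every E, a product of projectors is represented by a pair (Alice word, Bob word).\<close>

type_synonym word = "(nat \<times> nat) list \<times> (nat \<times> nat) list"

text \<open>Normal form of a one-party word modulo E E = E (projectors) and
  E^x_a E^x_a' = 0 for a \<noteq> a'; None represents 0.\<close>

fun red :: "(nat \<times> nat) list \<Rightarrow> (nat \<times> nat) list option" where
  "red [] = Some []"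
| "red (p # w) = (case red w of
      None \<Rightarrow> None
    | Some [] \<Rightarrow> Some [p]
    | Some (q # r) \<Rightarrow> (if p = q then Some (q # r)
                       else if fst p = fst q then None else Some (p # q # r)))"

definition red_word :: "word \<Rightarrow> word option" where
  "red_word w = (case (red (fst w), red (snd w)) of
      (Some u, Some v) \<Rightarrow> Some (u, v) | _ \<Rightarrow> None)"

definition wmult :: "word \<Rightarrow> word \<Rightarrow> word" where
  "wmult u v = (fst u @ fst v, snd u @ snd v)"

definition wadj :: "word \<Rightarrow> word" where
  "wadj u = (rev (fst u), rev (snd u))"

text \<open>A linear functional on the span of monomials is given by its values on the
  (nonzero, reduced) monomials; it is evaluated on a word through its normal form.\<close>

definition evL :: "(word \<Rightarrow> real) \<Rightarrow> word \<Rightarrow> real" where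
  "evL L w = (case red_word w of None \<Rightarrow> 0 | Some m \<Rightarrow> L m)"

definition AmBn :: "nat \<Rightarrow> nat \<Rightarrow> nat \<Rightarrow> nat \<Rightarrow> nat \<Rightarrow> nat \<Rightarrow> word set" where
  "AmBn m n nX nA nY nB = {(u, v). length u \<le> m \<and> length v \<le> n \<and>
      set u \<subseteq> {0..<nX} \<times> {0..<nA} \<and> set v \<subseteq> {0..<nY} \<times> {0..<nB}}"

definition Oset :: "(nat \<times> nat) set \<Rightarrow> nat \<Rightarrow> nat \<Rightarrow> nat \<Rightarrow> nat \<Rightarrow> word set" where
  "Oset S nX nA nY nB = (\<Union>(m, n)\<in>S. AmBn m n nX nA nY nB)"

definition O_positive :: "(nat \<times> nat) set \<Rightarrow> nat \<Rightarrow> nat \<Rightarrow> nat \<Rightarrow> nat \<Rightarrow>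
    (nat \<Rightarrow> nat \<Rightarrow> nat \<Rightarrow> nat \<Rightarrow> real) \<Rightarrow> bool" where
  "O_positive S nX nA nY nB P \<longleftrightarrow> is_box nX nA nY nB P \<and>
     (\<exists>L :: word \<Rightarrow> real.
        L ([], []) = 1 \<and>
        (\<forall>W c. finite W \<and> W \<subseteq> Oset S nX nA nY nB \<longrightarrow>
            0 \<le> (\<Sum>u\<in>W. \<Sum>v\<in>W. c u * c v * evL L (wmult u (wadj v)))) \<and>
        (\<forall>a<nA. \<forall>b<nB. \<forall>x<nX. \<forall>y<nY. P a b x y = evL L ([(x, a)], [(y, b)])))"

text \<open>k boxes, box i has alphabets nX i, nA i, nY i, nB i and distribution P i.
  A local history is the list of (box, (input, output)) in chronological order.
  A local wiring: nxt chi h = Some (i, x) means "probe box i with input x" given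
  effective input chi and history h; None means stop.  out chi h is the effective output.\<close>

type_synonym hist = "(nat \<times> (nat \<times> nat)) list"

definition wiring_wf :: "nat \<Rightarrow> (nat \<Rightarrow> nat) \<Rightarrow> nat \<Rightarrow> nat \<Rightarrow>
    (nat \<Rightarrow> hist \<Rightarrow> (nat \<times> nat) option) \<Rightarrow> (nat \<Rightarrow> hist \<Rightarrow> nat) \<Rightarrow> bool" where
  "wiring_wf k nIn nIn' nOut' nxt out \<longleftrightarrow>
     (\<forall>chi<nIn'. \<forall>h. (\<forall>i x. nxt chi h = Some (i, x) \<longrightarrow>
                           i < k \<and> i \<notin> fst ` set h \<and> x < nIn i)
                     \<and> out chi h < nOut')"

definition complete_hist :: "(nat \<Rightarrow> nat) \<Rightarrow> (nat \<Rightarrow> hist \<Rightarrow> (nat \<times> nat) option) \<Rightarrow>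
    nat \<Rightarrow> hist \<Rightarrow> bool" where
  "complete_hist nOut nxt chi h \<longleftrightarrow>
     (\<forall>t<length h. nxt chi (take t h) = Some (fst (h ! t), fst (snd (h ! t)))
                  \<and> snd (snd (h ! t)) < nOut (fst (h ! t)))
     \<and> nxt chi h = None"

definition box_factor :: "(nat \<Rightarrow> nat) \<Rightarrow> (nat \<Rightarrow> nat) \<Rightarrow>
    (nat \<Rightarrow> nat \<Rightarrow> nat \<Rightarrow> nat \<Rightarrow> nat \<Rightarrow> real) \<Rightarrow> hist \<Rightarrow> hist \<Rightarrow> nat \<Rightarrow> real" where
  "box_factor nA nB P hA hB i = (case (map_of hA i, map_of hB i) of
       (Some (x, a), Some (y, b)) \<Rightarrow> P i a b x y
     | (Some (x, a), None) \<Rightarrow> (\<Sum>b<nB i. P i a b x 0)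
     | (None, Some (y, b)) \<Rightarrow> (\<Sum>a<nA i. P i a b 0 y)
     | (None, None) \<Rightarrow> 1)"

definition wired_box :: "nat \<Rightarrow> (nat \<Rightarrow> nat) \<Rightarrow> (nat \<Rightarrow> nat) \<Rightarrow>
    (nat \<Rightarrow> nat \<Rightarrow> nat \<Rightarrow> nat \<Rightarrow> nat \<Rightarrow> real) \<Rightarrow>
    (nat \<Rightarrow> hist \<Rightarrow> (nat \<times> nat) option) \<Rightarrow> (nat \<Rightarrow> hist \<Rightarrow> nat) \<Rightarrow>
    (nat \<Rightarrow> hist \<Rightarrow> (nat \<times> nat) option) \<Rightarrow> (nat \<Rightarrow> hist \<Rightarrow> nat) \<Rightarrow>
    nat \<Rightarrow> nat \<Rightarrow> nat \<Rightarrow> nat \<Rightarrow> real" where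
  "wired_box k nA nB P nxtA outA nxtB outB = (\<lambda>alpha beta chi ups.
     \<Sum>hA\<in>{h. complete_hist nA nxtA chi h}. \<Sum>hB\<in>{h. complete_hist nB nxtB ups h}.
       (if outA chi hA = alpha \<and> outB ups hB = beta
        then (\<Prod>i<k. box_factor nA nB P hA hB i) else 0))"

end

theory Submission
  imports Defs
begin


definition adjok :: "(nat \<times> nat) list \<Rightarrow> bool" where
  "adjok w = successively (\<lambda>p q. fst p = fst q \<longrightarrow> p = q) w"

lemma red_char: "red w = (if adjok w then Some (remdups_adj w) else None)"
proof (induction w)
  case Nil then show ?case by (simp add: adjok_def)
next
  case (Cons p w)
  show ?case
  proof (cases w)
    case Nil then show ?thesis by (simp add: adjok_def)
  next
    case (Cons q w')
    then show ?thesis using Cons.IH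
      by (auto simp: adjok_def remdups_adj_Cons split: list.splits)
  qed
qed

lemma adjok_rev[simp]: "adjok (rev w) = adjok w"
  unfolding adjok_def by (simp add: eq_commute)

lemma adjok_remdups_adj[simp]: "adjok (remdups_adj w) = adjok w"
  unfolding adjok_def by (rule successively_remdups_adj_iff) simp

lemma adjok_dup: "adjok (u @ p # p # v) = adjok (u @ p # v)"
  unfolding adjok_def by (simp add: successively_append_iff)

lemma remdups_adj_dup: "remdups_adj (u @ p # p # v) = remdups_adj (u @ p # v)"
  by (induction u) (simp, simp add: remdups_adj_Cons)

lemma adjok_conflict: "fst p = fst q \<Longrightarrow> p \<noteq> q \<Longrightarrow> \<not> adjok (u @ p # q # v)"
  unfolding adjok_def by (simp add: successively_append_iff)

lemma red_dup: "length l \<le> 1 \<Longrightarrow> red (u @ l @ l @ v) = red (u @ l @ v)"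
  apply (cases l) apply simp
  apply (auto simp: red_char adjok_dup remdups_adj_dup)
  done

lemma red_rev: "red (rev w) = map_option rev (red w)"
  by (simp add: red_char)

lemma red_word_char: "red_word w = (if adjok (fst w) \<and> adjok (snd w)
   then Some (remdups_adj (fst w), remdups_adj (snd w)) else None)"
  by (simp add: red_word_def red_char)

lemma red_word_wadj: "red_word (wadj w) = map_option wadj (red_word w)"
  by (simp add: red_word_char wadj_def)

lemma wadj_wadj[simp]: "wadj (wadj w) = w" by (simp add: wadj_def)

lemma wadj_wmult: "wadj (wmult u (wadj v)) = wmult v (wadj u)"
  by (simp add: wadj_def wmult_def)

lemma not_adjok_nth: "\<not> adjok w \<longleftrightarrow> (\<exists>n. Suc n < length w \<and> fst (w!n) = fst (w!Suc n) \<and> w!n \<noteq> w!Suc n)"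
  unfolding adjok_def successively_conv_nth by blast

lemma remdups_adj_id: "(\<forall>n. Suc n < length w \<longrightarrow> w!n \<noteq> w!Suc n) \<Longrightarrow> remdups_adj w = w"
  by (simp add: distinct_adj_altdef[symmetric] distinct_adj_conv_nth)


definition psdk :: "'j set \<Rightarrow> ('j \<Rightarrow> 'j \<Rightarrow> real) \<Rightarrow> bool" where
  "psdk J K \<longleftrightarrow> (\<forall>d. 0 \<le> (\<Sum>j\<in>J. \<Sum>j'\<in>J. d j * d j' * K j j'))"

definition symk :: "'j set \<Rightarrow> ('j \<Rightarrow> 'j \<Rightarrow> real) \<Rightarrow> bool" where
  "symk J K \<longleftrightarrow> (\<forall>j\<in>J. \<forall>j'\<in>J. K j j' = K j' j)"

lemma psdkD: "psdk J K \<Longrightarrow> 0 \<le> (\<Sum>j\<in>J. \<Sum>j'\<in>J. d j * d j' * K j j')"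
  unfolding psdk_def by blast

lemma psdk_insert:
  fixes K :: "'j \<Rightarrow> 'j \<Rightarrow> real"
  assumes "finite J" "a \<notin> J" "psdk (insert a J) K" shows "psdk J K"
  unfolding psdk_def
proof
  fix d :: "'j \<Rightarrow> real"
  let ?d = "\<lambda>j. if j = a then 0 else d j"
  have "0 \<le> (\<Sum>j\<in>insert a J. \<Sum>j'\<in>insert a J. ?d j * ?d j' * K j j')"
    using assms(3) by (rule psdkD)
  also have "\<dots> = (\<Sum>j\<in>J. \<Sum>j'\<in>J. d j * d j' * K j j')"
    using assms(1,2)
    apply (simp add: sum.insert)
    apply (intro sum.cong refl)
    apply auto
    done
  finally show "0 \<le> (\<Sum>j\<in>J. \<Sum>j'\<in>J. d j * d j' * K j j')" .
qed

lemma sum_if_mult: "finite I \<Longrightarrow> j \<in> I \<Longrightarrow> (\<Sum>i\<in>I. (if i = j then c else 0) * f i) = c * (f j::real)"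
  by (subst sum.cong[OF refl, of _ _ "\<lambda>i. if i = j then c * f j else 0"]) auto

lemma sum2_if: "finite I \<Longrightarrow> j \<in> I \<Longrightarrow>
  (\<Sum>i\<in>I. \<Sum>i'\<in>I. (if i = j then c else 0) * (if i' = j then c else 0) * K i i') = c * c * (K j j::real)"
proof -
  assume a: "finite I" "j \<in> I"
  have "(\<Sum>i'\<in>I. (if i = j then c else 0) * (if i' = j then c else 0) * K i i') = (if i = j then c else 0) * (c * K i j)" for i
  proof -
    have "(\<Sum>i'\<in>I. (if i = j then c else 0) * (if i' = j then c else 0) * K i i') = (if i = j then c else 0) * (\<Sum>i'\<in>I. (if i' = j then c else 0) * K i i')"
      by (simp add: sum_distrib_left mult.assoc)
    also have "\<dots> = (if i = j then c else 0) * (c * K i j)" using sum_if_mult[OF a, of c "\<lambda>i'. K i i'"] by simp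
    finally show ?thesis .
  qed
  then show ?thesis using sum_if_mult[OF a, of c "\<lambda>i. c * K i j"] by simp
qed

lemma quad_expand:
  fixes K :: "'j \<Rightarrow> 'j \<Rightarrow> real"
  assumes "finite I" "a \<in> I" "symk I K"
  shows "(\<Sum>j\<in>I. \<Sum>j'\<in>I. (d j + (if j = a then l else 0)) * (d j' + (if j' = a then l else 0)) * K j j')
    = (\<Sum>j\<in>I. \<Sum>j'\<in>I. d j * d j' * K j j') + 2 * l * (\<Sum>j\<in>I. d j * K j a) + l * l * K a a"
proof -
  have e: "(d j + (if j = a then l else 0)) * (d j' + (if j' = a then l else 0)) * K j j'
     = d j * d j' * K j j' + (if j' = a then l * d j * K j a else 0) + (if j = a then l * d j' * K a j' else 0)
       + (if j = a then (if j' = a then l * l * K a a else 0) else 0)" for j j'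
    by (auto simp: algebra_simps)
  have s: "(\<Sum>j'\<in>I. d j' * K a j') = (\<Sum>j\<in>I. d j * K j a)"
    using assms(3,2) unfolding symk_def by (intro sum.cong) auto
  have "(\<Sum>j\<in>I. \<Sum>j'\<in>I. (d j + (if j = a then l else 0)) * (d j' + (if j' = a then l else 0)) * K j j')
    = (\<Sum>j\<in>I. \<Sum>j'\<in>I. d j * d j' * K j j') + (\<Sum>j\<in>I. \<Sum>j'\<in>I. (if j' = a then l * d j * K j a else 0))
      + (\<Sum>j\<in>I. \<Sum>j'\<in>I. (if j = a then l * d j' * K a j' else 0))
      + (\<Sum>j\<in>I. \<Sum>j'\<in>I. (if j = a then (if j' = a then l * l * K a a else 0) else 0))"
    unfolding e by (simp only: sum.distrib)
  also have "(\<Sum>j\<in>I. \<Sum>j'\<in>I. (if j' = a then l * d j * K j a else 0)) = l * (\<Sum>j\<in>I. d j * K j a)"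
    using assms(1,2) by (simp add: sum.delta' sum_distrib_left algebra_simps)
  also have "(\<Sum>j\<in>I. \<Sum>j'\<in>I. (if j = a then l * d j' * K a j' else 0)) = (\<Sum>j\<in>I. if j = a then (\<Sum>j'\<in>I. l * d j' * K a j') else 0)"
    by (intro sum.cong refl) auto
  also have "\<dots> = l * (\<Sum>j\<in>I. d j * K j a)"
    using assms(1,2) s by (simp add: sum.delta' mult.assoc flip: sum_distrib_left)
  also have "(\<Sum>j\<in>I. \<Sum>j'\<in>I. (if j = a then (if j' = a then l * l * K a a else 0) else 0)) = (\<Sum>j\<in>I. if j = a then l * l * K a a else 0)"
    using assms(1,2) by (intro sum.cong refl) (simp add: sum.delta')
  also have "\<dots> = l * l * K a a" using assms(1,2) by (simp add: sum.delta')
  finally show ?thesis by simp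
qed

lemma gram:
  fixes J :: "'j set" and K :: "'j \<Rightarrow> 'j \<Rightarrow> real"
  assumes "finite J" "psdk J K" "symk J K"
  shows "\<exists>n (\<phi>::nat \<Rightarrow> 'j \<Rightarrow> real). \<forall>j\<in>J. \<forall>j'\<in>J. K j j' = (\<Sum>r<n. \<phi> r j * \<phi> r j')"
  using assms
proof (induction J arbitrary: K rule: finite_induct)
  case empty then show ?case by auto
next
  case (insert a J)
  let ?I = "insert a J"
  have fI: "finite ?I" using insert by simp
  have Kaa: "0 \<le> K a a"
  proof -
    have "0 \<le> (\<Sum>j\<in>?I. \<Sum>j'\<in>?I. (0 + (if j = a then 1 else 0)) * (0 + (if j' = a then 1 else 0)) * K j j')"
      using insert.prems(1) by (rule psdkD)
    also have "\<dots> = K a a" using quad_expand[OF fI _ insert.prems(2), of a "\<lambda>_. 0" 1] by simp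
    finally show ?thesis .
  qed
  show ?case
  proof (cases "K a a = 0")
    case True
    have row: "K j a = 0" if "j \<in> ?I" for j
    proof (rule ccontr)
      assume ne: "K j a \<noteq> 0"
      have gen: "0 \<le> t * t * K j a * K j a * K j j - 2 * t * K j a * K j a" for t :: real
      proof -
        define dt where "dt = (\<lambda>i. if i = j then - t * K j a else (0::real))"
        have "0 \<le> (\<Sum>i\<in>?I. \<Sum>i'\<in>?I. (dt i + (if i = a then 1 else 0)) * (dt i' + (if i' = a then 1 else 0)) * K i i')"
          using insert.prems(1) by (rule psdkD)
        also have "\<dots> = (\<Sum>i\<in>?I. \<Sum>i'\<in>?I. dt i * dt i' * K i i') + 2 * 1 * (\<Sum>i\<in>?I. dt i * K i a) + 1 * 1 * K a a"
          by (rule quad_expand[OF fI _ insert.prems(2)]) simp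
        also have "(\<Sum>i\<in>?I. dt i * K i a) = - t * K j a * K j a" using sum_if_mult[OF fI that, of "- t * K j a" "\<lambda>i. K i a"] unfolding dt_def
          by simp
        also have "(\<Sum>i\<in>?I. \<Sum>i'\<in>?I. dt i * dt i' * K i i') = t * t * K j a * K j a * K j j" using sum2_if[OF fI that, of "- t * K j a" K] unfolding dt_def
          by (simp add: algebra_simps)
        finally show ?thesis using True by (simp add: algebra_simps)
      qed
      define q where "q = K j a * K j a"
      have qpos: "q > 0" using ne not_real_square_gt_zero unfolding q_def by blast
      have "0 \<le> q * (t * (t * K j j - 2))" for t using gen[of t] unfolding q_def by (simp add: algebra_simps)
      hence H: "0 \<le> t * (t * K j j - 2)" for t using qpos by (simp add: zero_le_mult_iff)
      define t where "t = 1 / (\<bar>K j j\<bar> + 1)"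
      have tpos: "t > 0" unfolding t_def by (simp add: add_pos_nonneg)
      from H[of t] tpos have "0 \<le> t * K j j - 2"
        by (simp add: zero_le_mult_iff)
      moreover have "t * K j j \<le> 1"
      proof -
        have "t * K j j \<le> t * \<bar>K j j\<bar>" using tpos by (intro mult_left_mono) auto
        also have "\<dots> = \<bar>K j j\<bar> / (\<bar>K j j\<bar> + 1)" unfolding t_def by simp
        also have "\<dots> \<le> 1" by (simp add: divide_le_eq)
        finally show ?thesis .
      qed
      ultimately show False by simp
    qed
    have pJ: "psdk J K" using psdk_insert[OF insert.hyps(1,2) insert.prems(1)] .
    have sJ: "symk J K" using insert.prems(2) unfolding symk_def by auto
    obtain n :: nat and \<phi> where IH: "\<forall>j\<in>J. \<forall>j'\<in>J. K j j' = (\<Sum>r<n. \<phi> r j * \<phi> r j')"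
      using insert.IH[OF pJ sJ] by blast
    define \<psi> where "\<psi> = (\<lambda>r j. if j = a then 0 else \<phi> r j)"
    have "\<forall>j\<in>?I. \<forall>j'\<in>?I. K j j' = (\<Sum>r<n. \<psi> r j * \<psi> r j')"
    proof (intro ballI)
      fix j j' assume j: "j \<in> ?I" and j': "j' \<in> ?I"
      show "K j j' = (\<Sum>r<n. \<psi> r j * \<psi> r j')"
      proof (cases "j = a \<or> j' = a")
        case True
        then show ?thesis using row j j' insert.prems(2) unfolding \<psi>_def symk_def by auto
      next
        case False
        then show ?thesis using IH j j' unfolding \<psi>_def by auto
      qed
    qed
    then show ?thesis by blast
  next
    case False
    with Kaa have pos: "K a a > 0" by simp
    define \<phi>0 where "\<phi>0 = (\<lambda>j. K j a / sqrt (K a a))"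
    define K' where "K' = (\<lambda>j j'. K j j' - \<phi>0 j * \<phi>0 j')"
    have sq: "sqrt (K a a) * sqrt (K a a) = K a a" using pos by simp
    have symI: "\<And>j j'. j \<in> ?I \<Longrightarrow> j' \<in> ?I \<Longrightarrow> K j j' = K j' j" using insert.prems(2) unfolding symk_def by blast
    have row': "K' a j = 0" "K' j a = 0" if "j \<in> ?I" for j
      using that pos symI[of j a] unfolding K'_def \<phi>0_def
      by (auto simp: field_simps sq)
    have psdI: "psdk ?I K'"
      unfolding psdk_def
    proof
      fix d
      define s where "s = (\<Sum>j\<in>?I. d j * K j a)"
      define l where "l = - s / K a a"
      have "0 \<le> (\<Sum>j\<in>?I. \<Sum>j'\<in>?I. (d j + (if j = a then l else 0)) * (d j' + (if j' = a then l else 0)) * K j j')"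
        using insert.prems(1) by (rule psdkD)
      also have "\<dots> = (\<Sum>j\<in>?I. \<Sum>j'\<in>?I. d j * d j' * K j j') + 2 * l * s + l * l * K a a"
        unfolding s_def by (rule quad_expand[OF fI _ insert.prems(2)]) simp
      also have "\<dots> = (\<Sum>j\<in>?I. \<Sum>j'\<in>?I. d j * d j' * K j j') - s * s / K a a"
        unfolding l_def using pos by (simp add: field_simps)
      also have "\<dots> = (\<Sum>j\<in>?I. \<Sum>j'\<in>?I. d j * d j' * K' j j')"
      proof -
        have "(\<Sum>j\<in>?I. \<Sum>j'\<in>?I. d j * d j' * K' j j') = (\<Sum>j\<in>?I. \<Sum>j'\<in>?I. d j * d j' * K j j')
             - (\<Sum>j\<in>?I. \<Sum>j'\<in>?I. (d j * \<phi>0 j) * (d j' * \<phi>0 j'))"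
          unfolding K'_def by (simp add: algebra_simps sum_subtractf)
        also have "(\<Sum>j\<in>?I. \<Sum>j'\<in>?I. (d j * \<phi>0 j) * (d j' * \<phi>0 j')) = (\<Sum>j\<in>?I. d j * \<phi>0 j) * (\<Sum>j\<in>?I. d j * \<phi>0 j)"
          by (simp add: sum_product)
        also have "(\<Sum>j\<in>?I. d j * \<phi>0 j) = s / sqrt (K a a)"
          unfolding s_def \<phi>0_def by (simp add: sum_divide_distrib)
        finally show ?thesis using sq pos by (simp add: field_simps)
      qed
      finally show "0 \<le> (\<Sum>j\<in>?I. \<Sum>j'\<in>?I. d j * d j' * K' j j')" .
    qed
    have pJ: "psdk J K'" using psdk_insert[OF insert.hyps(1,2) psdI] .
    have sJ: "symk J K'" using symI unfolding symk_def K'_def by (auto simp: mult.commute)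
    obtain n :: nat and \<phi> where IH: "\<forall>j\<in>J. \<forall>j'\<in>J. K' j j' = (\<Sum>r<n. \<phi> r j * \<phi> r j')"
      using insert.IH[OF pJ sJ] by blast
    define \<psi> where "\<psi> = (\<lambda>r j. if r = 0 then \<phi>0 j else if j = a then 0 else \<phi> (r - 1) j)"
    have "\<forall>j\<in>?I. \<forall>j'\<in>?I. K j j' = (\<Sum>r<Suc n. \<psi> r j * \<psi> r j')"
    proof (intro ballI)
      fix j j' assume j: "j \<in> ?I" and j': "j' \<in> ?I"
      have eq: "(\<Sum>r<Suc n. \<psi> r j * \<psi> r j') = \<phi>0 j * \<phi>0 j' + (\<Sum>r<n. \<psi> (Suc r) j * \<psi> (Suc r) j')"
        unfolding sum.lessThan_Suc_shift by (simp add: \<psi>_def)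
      show "K j j' = (\<Sum>r<Suc n. \<psi> r j * \<psi> r j')"
      proof (cases "j = a \<or> j' = a")
        case True
        then have "K' j j' = 0" using row' j j' by auto
        then show ?thesis unfolding eq using True unfolding \<psi>_def K'_def by auto
      next
        case False
        then have "j \<in> J" "j' \<in> J" using j j' by auto
        then have "K j j' - \<phi>0 j * \<phi>0 j' = (\<Sum>r<n. \<phi> r j * \<phi> r j')" using IH unfolding K'_def by blast
        then show ?thesis unfolding eq using False unfolding \<psi>_def by (simp add: algebra_simps)
      qed
    qed
    then show ?thesis by blast
  qed
qed

lemma psdk_mult:
  fixes J :: "'j set"
  assumes "finite J" "psdk J K1" "psdk J K2" "symk J K2"
  shows "psdk J (\<lambda>j j'. K1 j j' * K2 j j')"
proof -
  obtain n :: nat and \<phi> where G: "\<forall>j\<in>J. \<forall>j'\<in>J. K2 j j' = (\<Sum>r<n. \<phi> r j * \<phi> r j')"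
    using gram[OF assms(1,3,4)] by blast
  show ?thesis unfolding psdk_def
  proof
    fix d
    have "(\<Sum>j\<in>J. \<Sum>j'\<in>J. d j * d j' * (K1 j j' * K2 j j'))
       = (\<Sum>j\<in>J. \<Sum>j'\<in>J. \<Sum>r<n. (d j * \<phi> r j) * (d j' * \<phi> r j') * K1 j j')"
      using G by (intro sum.cong refl) (simp add: sum_distrib_left sum_distrib_right algebra_simps)
    also have "\<dots> = (\<Sum>r<n. \<Sum>j\<in>J. \<Sum>j'\<in>J. (d j * \<phi> r j) * (d j' * \<phi> r j') * K1 j j')"
      by (simp add: sum.swap[of _ "{..<n}"])
    also have "0 \<le> \<dots>"
      by (rule sum_nonneg) (rule psdkD[OF assms(2)])
    finally show "0 \<le> (\<Sum>j\<in>J. \<Sum>j'\<in>J. d j * d j' * (K1 j j' * K2 j j'))" .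
  qed
qed

lemma psdk_prod:
  fixes J :: "'j set" and k :: nat and K :: "nat \<Rightarrow> 'j \<Rightarrow> 'j \<Rightarrow> real"
  assumes "finite J" "\<forall>i<k. psdk J (K i) \<and> symk J (K i)"
  shows "psdk J (\<lambda>j j'. \<Prod>i<k. K i j j')"
  using assms(2)
proof (induction k)
  case 0
  show ?case unfolding psdk_def
  proof
    fix d
    have "(\<Sum>j\<in>J. \<Sum>j'\<in>J. d j * d j' * (\<Prod>i<0. K i j j')) = (\<Sum>j\<in>J. d j) * (\<Sum>j\<in>J. d j)"
      by (simp add: sum_product)
    then show "0 \<le> (\<Sum>j\<in>J. \<Sum>j'\<in>J. d j * d j' * (\<Prod>i<0. K i j j'))" by simp
  qed
next
  case (Suc k)
  have "psdk J (\<lambda>j j'. (\<Prod>i<k. K i j j') * K k j j')"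
    using Suc by (intro psdk_mult[OF assms(1)]) auto
  then show ?case by (simp add: prod.lessThan_Suc)
qed


lemma sum_group:
  assumes "finite J"
  shows "(\<Sum>j\<in>J. d j * F (g j)) = (\<Sum>w\<in>g ` J. (\<Sum>j\<in>{x\<in>J. g x = w}. d j) * (F w :: real))"
proof -
  have "(\<Sum>j\<in>J. d j * F (g j)) = (\<Sum>w\<in>g ` J. \<Sum>j\<in>{x\<in>J. g x = w}. d j * F (g j))"
    using sum.image_gen[OF assms] by blast
  also have "\<dots> = (\<Sum>w\<in>g ` J. (\<Sum>j\<in>{x\<in>J. g x = w}. d j) * F w)"
    by (intro sum.cong refl) (simp add: sum_distrib_right)
  finally show ?thesis .
qed

lemma box_kernel:
  assumes pos: "\<forall>W c. finite W \<and> W \<subseteq> Os \<longrightarrow> 0 \<le> (\<Sum>u\<in>W. \<Sum>v\<in>W. c u * c v * evL L (wmult u (wadj v)))"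
    and fin: "finite J" and sub: "g ` J \<subseteq> Os"
  shows "psdk J (\<lambda>j j'. evL L (wmult (g j) (wadj (g j'))))"
  unfolding psdk_def
proof
  fix d :: "'a \<Rightarrow> real"
  define c where "c w = (\<Sum>j\<in>{x\<in>J. g x = w}. d j)" for w
  have "(\<Sum>j\<in>J. \<Sum>j'\<in>J. d j * d j' * evL L (wmult (g j) (wadj (g j'))))
     = (\<Sum>j\<in>J. d j * (\<Sum>j'\<in>J. d j' * evL L (wmult (g j) (wadj (g j')))))"
    by (simp add: sum_distrib_left mult.assoc)
  also have "\<dots> = (\<Sum>j\<in>J. d j * (\<Sum>v\<in>g ` J. c v * evL L (wmult (g j) (wadj v))))"
    unfolding c_def using sum_group[OF fin, of d "\<lambda>v. evL L (wmult _ (wadj v))" g] by simp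
  also have "\<dots> = (\<Sum>u\<in>g ` J. c u * (\<Sum>v\<in>g ` J. c v * evL L (wmult u (wadj v))))"
    unfolding c_def using sum_group[OF fin, of d "\<lambda>u. (\<Sum>v\<in>g ` J. c v * evL L (wmult u (wadj v)))" g]
    by (simp add: c_def)
  also have "\<dots> = (\<Sum>u\<in>g ` J. \<Sum>v\<in>g ` J. c u * c v * evL L (wmult u (wadj v)))"
    by (simp add: sum_distrib_left mult.assoc)
  also have "0 \<le> \<dots>" using pos fin sub by blast
  finally show "0 \<le> (\<Sum>j\<in>J. \<Sum>j'\<in>J. d j * d j' * evL L (wmult (g j) (wadj (g j'))))" .
qed

definition Jm :: "nat \<Rightarrow> nat \<Rightarrow> (unit + nat + nat) set" where
  "Jm nA nB = insert (Inl ()) (Inr ` (Inl ` {..<nA} \<union> Inr ` {..<nB}))"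

lemma sumJ: "(\<Sum>j\<in>Jm nA nB. h j) = h (Inl ()) + (\<Sum>a<nA. h (Inr (Inl a))) + (\<Sum>b<nB. h (Inr (Inr b)))"
proof -
  have "(\<Sum>j\<in>Jm nA nB. h j) = h (Inl ()) + (\<Sum>j\<in>Inr ` (Inl ` {..<nA} \<union> Inr ` {..<nB}). h j)"
    unfolding Jm_def by (subst sum.insert) auto
  also have "(\<Sum>j\<in>Inr ` (Inl ` {..<nA} \<union> Inr ` {..<nB}). h j) = (\<Sum>j\<in>(Inl ` {..<nA} \<union> Inr ` {..<nB}). h (Inr j))"
    by (subst sum.reindex) auto
  also have "\<dots> = (\<Sum>j\<in>Inl ` {..<nA}. h (Inr j)) + (\<Sum>j\<in>Inr ` {..<nB}. h (Inr j))"
    by (subst sum.union_disjoint) auto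
  also have "\<dots> = (\<Sum>a<nA. h (Inr (Inl a))) + (\<Sum>b<nB. h (Inr (Inr b)))"
    by (simp add: sum.reindex)
  finally show ?thesis by (simp add: add.assoc)
qed

definition gm :: "nat \<Rightarrow> nat \<Rightarrow> unit + nat + nat \<Rightarrow> word" where
  "gm x y j = (case j of Inl _ \<Rightarrow> ([], []) | Inr (Inl a) \<Rightarrow> ([(x, a)], []) | Inr (Inr b) \<Rightarrow> ([], [(y, b)]))"

definition dm :: "real \<Rightarrow> (nat \<Rightarrow> real) \<Rightarrow> (nat \<Rightarrow> real) \<Rightarrow> unit + nat + nat \<Rightarrow> real" where
  "dm \<gamma> e f j = (case j of Inl _ \<Rightarrow> \<gamma> | Inr (Inl a) \<Rightarrow> e a | Inr (Inr b) \<Rightarrow> f b)"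

lemma evL_simps:
  "evL L (wmult ([], []) (wadj ([], []))) = L ([], [])"
  "evL L (wmult ([], []) (wadj ([(x, a)], []))) = evL L ([(x, a)], [])"
  "evL L (wmult ([(x, a)], []) (wadj ([], []))) = evL L ([(x, a)], [])"
  "evL L (wmult ([], []) (wadj ([], [(y, b)]))) = evL L ([], [(y, b)])"
  "evL L (wmult ([], [(y, b)]) (wadj ([], []))) = evL L ([], [(y, b)])"
  "evL L (wmult ([(x, a)], []) (wadj ([(x, a')], []))) = (if a = a' then evL L ([(x, a)], []) else 0)"
  "evL L (wmult ([], [(y, b)]) (wadj ([], [(y, b')]))) = (if b = b' then evL L ([], [(y, b)]) else 0)"
  "evL L (wmult ([(x, a)], []) (wadj ([], [(y, b)]))) = evL L ([(x, a)], [(y, b)])"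
  "evL L (wmult ([], [(y, b)]) (wadj ([(x, a)], []))) = evL L ([(x, a)], [(y, b)])"
  by (auto simp: evL_def red_word_def wmult_def wadj_def)

lemma sum_delta_mult: fixes a n :: nat shows "a < n \<Longrightarrow> (\<Sum>aa<n. g aa * (if a = aa then X else (0::real))) = g a * X"
proof -
  assume a: "a < n"
  have "(\<Sum>aa<n. g aa * (if a = aa then X else 0)) = (\<Sum>aa<n. if a = aa then g a * X else 0)" by (intro sum.cong) auto
  also have "\<dots> = g a * X" using sum.delta'[of "{..<n}" a "\<lambda>_. g a * X"] a by simp
  finally show ?thesis .
qed

lemma quadJ:
  fixes L :: "word \<Rightarrow> real" and x y nA nB :: nat and \<gamma> :: real and e f :: "nat \<Rightarrow> real"
  shows "(\<Sum>j\<in>Jm nA nB. \<Sum>j'\<in>Jm nA nB. dm \<gamma> e f j * dm \<gamma> e f j' * evL L (wmult (gm x y j) (wadj (gm x y j'))))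
    = \<gamma> * \<gamma> * L ([], []) + 2 * \<gamma> * (\<Sum>a<nA. e a * evL L ([(x, a)], [])) + 2 * \<gamma> * (\<Sum>b<nB. f b * evL L ([], [(y, b)]))
      + (\<Sum>a<nA. e a * e a * evL L ([(x, a)], [])) + (\<Sum>b<nB. f b * f b * evL L ([], [(y, b)]))
      + 2 * (\<Sum>a<nA. \<Sum>b<nB. e a * f b * evL L ([(x, a)], [(y, b)]))"
proof -
  define l where "l = (\<lambda>a. evL L ([(x, a)], []))"
  define m where "m = (\<lambda>b. evL L ([], [(y, b)]))"
  define Q where "Q = (\<lambda>a b. evL L ([(x, a)], [(y, b)]))"
  define M where "M = (\<lambda>j j'. evL L (wmult (gm x y j) (wadj (gm x y j'))))"
  define d where "d = dm \<gamma> e f"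
  have r0: "(\<Sum>j'\<in>Jm nA nB. d j' * M (Inl ()) j') = \<gamma> * L ([], []) + (\<Sum>a<nA. e a * l a) + (\<Sum>b<nB. f b * m b)"
    unfolding sumJ by (simp add: d_def M_def dm_def gm_def evL_simps l_def m_def)
  have r1: "(\<Sum>j'\<in>Jm nA nB. d j' * M (Inr (Inl a)) j') = \<gamma> * l a + e a * l a + (\<Sum>b<nB. f b * Q a b)" if "a < nA" for a
    unfolding sumJ using that by (simp add: d_def M_def dm_def gm_def evL_simps l_def Q_def sum_delta_mult mult.commute)
  have r2: "(\<Sum>j'\<in>Jm nA nB. d j' * M (Inr (Inr b)) j') = \<gamma> * m b + (\<Sum>a<nA. e a * Q a b) + f b * m b" if "b < nB" for b
    unfolding sumJ using that by (simp add: d_def M_def dm_def gm_def evL_simps m_def Q_def sum_delta_mult mult.commute)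
  have "(\<Sum>j\<in>Jm nA nB. \<Sum>j'\<in>Jm nA nB. d j * d j' * M j j') = (\<Sum>j\<in>Jm nA nB. d j * (\<Sum>j'\<in>Jm nA nB. d j' * M j j'))"
    by (simp add: sum_distrib_left mult.assoc)
  also have "\<dots> = \<gamma> * (\<gamma> * L ([], []) + (\<Sum>a<nA. e a * l a) + (\<Sum>b<nB. f b * m b))
      + (\<Sum>a<nA. e a * (\<gamma> * l a + e a * l a + (\<Sum>b<nB. f b * Q a b)))
      + (\<Sum>b<nB. f b * (\<gamma> * m b + (\<Sum>a<nA. e a * Q a b) + f b * m b))"
  proof -
    have A: "(\<Sum>a<nA. d (Inr (Inl a)) * (\<Sum>j'\<in>Jm nA nB. d j' * M (Inr (Inl a)) j')) = (\<Sum>a<nA. e a * (\<gamma> * l a + e a * l a + (\<Sum>b<nB. f b * Q a b)))"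
      apply (intro sum.cong refl) apply (subst r1) apply simp apply (simp add: d_def dm_def) done
    have B: "(\<Sum>b<nB. d (Inr (Inr b)) * (\<Sum>j'\<in>Jm nA nB. d j' * M (Inr (Inr b)) j')) = (\<Sum>b<nB. f b * (\<gamma> * m b + (\<Sum>a<nA. e a * Q a b) + f b * m b))"
      apply (intro sum.cong refl) apply (subst r2) apply simp apply (simp add: d_def dm_def) done
    show ?thesis unfolding sumJ[of "\<lambda>j. d j * (\<Sum>j'\<in>Jm nA nB. d j' * M j j')"] r0 A B
      by (simp add: d_def dm_def)
  qed
  also have "\<dots> = \<gamma> * \<gamma> * L ([], []) + 2 * \<gamma> * (\<Sum>a<nA. e a * l a) + 2 * \<gamma> * (\<Sum>b<nB. f b * m b)
      + (\<Sum>a<nA. e a * e a * l a) + (\<Sum>b<nB. f b * f b * m b) + 2 * (\<Sum>a<nA. \<Sum>b<nB. e a * f b * Q a b)"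
  proof -
    have sw: "(\<Sum>b<nB. f b * (\<Sum>a<nA. e a * Q a b)) = (\<Sum>a<nA. \<Sum>b<nB. e a * f b * Q a b)"
      by (simp add: sum_distrib_left sum.swap[of _ "{..<nB}"] mult.assoc mult.left_commute)
    have sw2: "(\<Sum>a<nA. e a * (\<Sum>b<nB. f b * Q a b)) = (\<Sum>a<nA. \<Sum>b<nB. e a * f b * Q a b)"
      by (simp add: sum_distrib_left mult.assoc)
    have e1: "(\<Sum>a<nA. e a * (\<gamma> * l a + e a * l a + (\<Sum>b<nB. f b * Q a b)))
        = \<gamma> * (\<Sum>a<nA. e a * l a) + (\<Sum>a<nA. e a * e a * l a) + (\<Sum>a<nA. e a * (\<Sum>b<nB. f b * Q a b))"
      by (simp add: sum.distrib sum_distrib_left algebra_simps)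
    have e2: "(\<Sum>b<nB. f b * (\<gamma> * m b + (\<Sum>a<nA. e a * Q a b) + f b * m b))
        = \<gamma> * (\<Sum>b<nB. f b * m b) + (\<Sum>b<nB. f b * (\<Sum>a<nA. e a * Q a b)) + (\<Sum>b<nB. f b * f b * m b)"
      by (simp add: sum.distrib sum_distrib_left algebra_simps)
    show ?thesis unfolding e1 e2 sw sw2 by (simp add: algebra_simps)
  qed
  finally show ?thesis unfolding d_def M_def l_def m_def Q_def .
qed

lemma finite_Jm: "finite (Jm nA nB)" unfolding Jm_def by simp

lemma box_marg:
  fixes L :: "word \<Rightarrow> real"
  assumes box: "is_box nX nA nY nB P" and L1: "L ([], []) = 1"
    and pos: "\<forall>W c. finite W \<and> W \<subseteq> Os \<longrightarrow> 0 \<le> (\<Sum>u\<in>W. \<Sum>v\<in>W. c u * c v * evL L (wmult u (wadj v)))"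
    and PL: "\<forall>a<nA. \<forall>b<nB. \<forall>x<nX. \<forall>y<nY. P a b x y = evL L ([(x, a)], [(y, b)])"
    and x: "x < nX" and y: "y < nY" and memO: "gm x y ` Jm nA nB \<subseteq> Os"
  shows "(\<forall>a<nA. evL L ([(x, a)], []) = (\<Sum>b<nB. P a b x y)) \<and> (\<forall>b<nB. evL L ([], [(y, b)]) = (\<Sum>a<nA. P a b x y))"
proof -
  define l where "l = (\<lambda>a. evL L ([(x, a)], []))"
  define m where "m = (\<lambda>b. evL L ([], [(y, b)]))"
  define Q where "Q = (\<lambda>a b. evL L ([(x, a)], [(y, b)]))"
  have K: "psdk (Jm nA nB) (\<lambda>j j'. evL L (wmult (gm x y j) (wadj (gm x y j'))))"
    by (rule box_kernel[OF pos finite_Jm memO])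
  have F: "0 \<le> \<gamma> * \<gamma> + 2 * \<gamma> * (\<Sum>a<nA. e a * l a) + 2 * \<gamma> * (\<Sum>b<nB. f b * m b)
      + (\<Sum>a<nA. e a * e a * l a) + (\<Sum>b<nB. f b * f b * m b) + 2 * (\<Sum>a<nA. \<Sum>b<nB. e a * f b * Q a b)"
    for \<gamma> e f
    using psdkD[OF K, of "dm \<gamma> e f"] unfolding quadJ l_def m_def Q_def L1 by simp
  have Qsum: "(\<Sum>a<nA. \<Sum>b<nB. Q a b) = 1"
    using box x y PL unfolding is_box_def Q_def
    by (metis (no_types, lifting) lessThan_iff sum.cong)
  define s where "s = (\<Sum>a<nA. l a)"
  define t where "t = (\<Sum>b<nB. m b)"
  have 1: "0 \<le> 1 - t" using F[of 1 "\<lambda>_. 0" "\<lambda>_. -1"] unfolding t_def by (simp add: sum_negf)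
  have 2: "0 \<le> 1 - s" using F[of 1 "\<lambda>_. -1" "\<lambda>_. 0"] unfolding s_def by (simp add: sum_negf)
  have 3: "0 \<le> s + t - 2" using F[of 0 "\<lambda>_. 1" "\<lambda>_. -1"] Qsum unfolding s_def t_def
    by (simp add: sum_negf)
  have t1: "t = 1" and s1: "s = 1" using 1 2 3 by auto
  have IA: "\<And>a0 c (h :: nat \<Rightarrow> real). a0 < nA \<Longrightarrow> (\<Sum>a<nA. (if a = a0 then c else 0) * h a) = c * h a0"
    by (rule sum_if_mult) auto
  have IB: "\<And>b0 c (h :: nat \<Rightarrow> real). b0 < nB \<Longrightarrow> (\<Sum>b<nB. (if b = b0 then c else 0) * h b) = c * h b0"
    by (rule sum_if_mult) auto
  have key: "D = 0" if H: "\<And>z. 0 \<le> 2 * z * D + z * z * ll" and ll: "0 \<le> ll" for D ll :: real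
  proof -
    define z where "z = - D / (ll + 1)"
    have p: "ll + 1 > 0" using ll by simp
    have h0: "0 \<le> (2 * z * D + z * z * ll) * ((ll + 1) * (ll + 1))" using H[of z] p by simp
    have lu: "z * (ll + 1) = - D" unfolding z_def using p by simp
    have "(2 * z * D + z * z * ll) * ((ll + 1) * (ll + 1)) = 2 * D * (z * (ll + 1)) * (ll + 1) + (z * (ll + 1)) * (z * (ll + 1)) * ll"
      by (simp add: algebra_simps)
    also have "\<dots> = - (D * D) * (ll + 2)" unfolding lu by (simp add: algebra_simps)
    finally have "D * D * (ll + 2) \<le> 0" using h0 by simp
    moreover have "0 \<le> D * D" by simp
    ultimately have "D * D = 0" using ll by (simp add: mult_le_0_iff) (smt (verit) mult_nonneg_nonneg)
    then show ?thesis by simp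
  qed
  have A: "l a0 = (\<Sum>b<nB. Q a0 b)" if a0: "a0 < nA" for a0
  proof -
    have ln: "0 \<le> l a0" using F[of 0 "\<lambda>a. if a = a0 then 1 else 0" "\<lambda>_. 0"] IA[OF a0, of 1 "\<lambda>a. (if a = a0 then 1 else 0) * l a"]
      by (simp add: mult.assoc)
    have "0 \<le> 2 * z * (l a0 - (\<Sum>b<nB. Q a0 b)) + z * z * l a0" for z
    proof -
      have "0 \<le> 1 + 2 * (\<Sum>a<nA. (if a = a0 then z else 0) * l a) + 2 * (\<Sum>b<nB. - m b)
          + (\<Sum>a<nA. (if a = a0 then z else 0) * (if a = a0 then z else 0) * l a) + (\<Sum>b<nB. m b)
          + 2 * (\<Sum>a<nA. \<Sum>b<nB. (if a = a0 then z else 0) * - 1 * Q a b)"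
        using F[of 1 "\<lambda>a. if a = a0 then z else 0" "\<lambda>_. -1"] by simp
      also have "(\<Sum>a<nA. (if a = a0 then z else 0) * l a) = z * l a0" using IA[OF a0] .
      also have "(\<Sum>a<nA. (if a = a0 then z else 0) * (if a = a0 then z else 0) * l a) = z * z * l a0"
        using IA[OF a0, of z "\<lambda>a. (if a = a0 then z else 0) * l a"] by (simp add: mult.assoc)
      also have "(\<Sum>a<nA. \<Sum>b<nB. (if a = a0 then z else 0) * - 1 * Q a b) = - z * (\<Sum>b<nB. Q a0 b)"
        using IA[OF a0, of z "\<lambda>a. - (\<Sum>b<nB. Q a b)"] by (simp add: sum_distrib_left sum_negf)
      finally show ?thesis using t1 unfolding t_def by (simp add: sum_negf algebra_simps)
    qed
    then show ?thesis using key[of "l a0 - (\<Sum>b<nB. Q a0 b)" "l a0"] ln by simp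
  qed
  have B: "m b0 = (\<Sum>a<nA. Q a b0)" if b0: "b0 < nB" for b0
  proof -
    have mn: "0 \<le> m b0" using F[of 0 "\<lambda>_. 0" "\<lambda>b. if b = b0 then 1 else 0"] IB[OF b0, of 1 "\<lambda>b. (if b = b0 then 1 else 0) * m b"]
      by (simp add: mult.assoc)
    have "0 \<le> 2 * z * (m b0 - (\<Sum>a<nA. Q a b0)) + z * z * m b0" for z
    proof -
      have "0 \<le> 1 + 2 * (\<Sum>a<nA. - l a) + 2 * (\<Sum>b<nB. (if b = b0 then z else 0) * m b)
          + (\<Sum>a<nA. l a) + (\<Sum>b<nB. (if b = b0 then z else 0) * (if b = b0 then z else 0) * m b)
          + 2 * (\<Sum>a<nA. \<Sum>b<nB. - 1 * (if b = b0 then z else 0) * Q a b)"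
        using F[of 1 "\<lambda>_. -1" "\<lambda>b. if b = b0 then z else 0"] by simp
      also have "(\<Sum>b<nB. (if b = b0 then z else 0) * m b) = z * m b0" using IB[OF b0] .
      also have "(\<Sum>b<nB. (if b = b0 then z else 0) * (if b = b0 then z else 0) * m b) = z * z * m b0"
        using IB[OF b0, of z "\<lambda>b. (if b = b0 then z else 0) * m b"] by (simp add: mult.assoc)
      also have "(\<Sum>a<nA. \<Sum>b<nB. - 1 * (if b = b0 then z else 0) * Q a b) = - z * (\<Sum>a<nA. Q a b0)"
      proof -
        have "(\<Sum>a<nA. \<Sum>b<nB. - 1 * (if b = b0 then z else 0) * Q a b) = (\<Sum>a<nA. - z * Q a b0)"
          using IB[OF b0] by (intro sum.cong refl) (simp add: sum_negf)
        then show ?thesis by (simp add: sum_distrib_left)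
      qed
      finally show ?thesis using s1 unfolding s_def by (simp add: sum_negf algebra_simps)
    qed
    then show ?thesis using key[of "m b0 - (\<Sum>a<nA. Q a b0)" "m b0"] mn by simp
  qed
  show ?thesis
  proof (intro conjI allI impI)
    fix a assume a: "a < nA"
    have "(\<Sum>b<nB. P a b x y) = (\<Sum>b<nB. Q a b)" using PL a x y unfolding Q_def by (intro sum.cong) auto
    then show "evL L ([(x, a)], []) = (\<Sum>b<nB. P a b x y)" using A[OF a] unfolding l_def by simp
  next
    fix b assume b: "b < nB"
    have "(\<Sum>a<nA. P a b x y) = (\<Sum>a<nA. Q a b)" using PL b x y unfolding Q_def by (intro sum.cong) auto
    then show "evL L ([], [(y, b)]) = (\<Sum>a<nA. P a b x y)" using B[OF b] unfolding m_def by simp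
  qed
qed


definition reach :: "(nat \<Rightarrow> nat) \<Rightarrow> (nat \<Rightarrow> hist \<Rightarrow> (nat \<times> nat) option) \<Rightarrow> nat \<Rightarrow> hist \<Rightarrow> bool" where
  "reach nOut nxt chi h \<longleftrightarrow> (\<forall>t<length h. nxt chi (take t h) = Some (fst (h ! t), fst (snd (h ! t)))
                  \<and> snd (snd (h ! t)) < nOut (fst (h ! t)))"

lemma complete_reach: "complete_hist nOut nxt chi h \<longleftrightarrow> reach nOut nxt chi h \<and> nxt chi h = None"
  unfolding complete_hist_def reach_def by blast

lemma reach_Nil[simp]: "reach nOut nxt chi []" unfolding reach_def by simp

definition bl :: "nat \<Rightarrow> hist \<Rightarrow> (nat \<times> nat) list" where
  "bl i h = map snd (filter (\<lambda>p. fst p = i) h)"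

lemma bl_map_of: "distinct (map fst h) \<Longrightarrow> bl i h = (case map_of h i of None \<Rightarrow> [] | Some e \<Rightarrow> [e])"
proof (induction h)
  case Nil then show ?case by (simp add: bl_def)
next
  case (Cons p h)
  show ?case
  proof (cases "fst p = i")
    case True
    then have "i \<notin> fst ` set h" using Cons.prems by auto
    then have "map_of h i = None" by (simp add: map_of_eq_None_iff)
    then have "bl i h = []" using Cons by simp
    then show ?thesis using True by (cases p) (simp add: bl_def)
  next
    case False
    then show ?thesis using Cons by (cases p) (simp add: bl_def)
  qed
qed

locale party =
  fixes k :: nat and nIn :: "nat \<Rightarrow> nat" and nIn' nOut' :: nat and nOut :: "nat \<Rightarrow> nat"
    and nxt :: "nat \<Rightarrow> hist \<Rightarrow> (nat \<times> nat) option" and out :: "nat \<Rightarrow> hist \<Rightarrow> nat"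
  assumes wf: "wiring_wf k nIn nIn' nOut' nxt out"
begin

lemma nxt_wf: "chi < nIn' \<Longrightarrow> nxt chi h = Some (i, x) \<Longrightarrow> i < k \<and> i \<notin> fst ` set h \<and> x < nIn i"
  using wf unfolding wiring_wf_def by blast

lemma out_wf: "chi < nIn' \<Longrightarrow> out chi h < nOut'"
  using wf unfolding wiring_wf_def by blast

lemma reach_props:
  assumes chi: "chi < nIn'" and r: "reach nOut nxt chi h"
  shows "distinct (map fst h) \<and> (\<forall>p\<in>set h. fst p < k \<and> fst (snd p) < nIn (fst p) \<and> snd (snd p) < nOut (fst p))"
proof -
  have st: "fst (h!t) < k \<and> fst (h!t) \<notin> fst ` set (take t h) \<and> fst (snd (h!t)) < nIn (fst (h!t)) \<and> snd (snd (h!t)) < nOut (fst (h!t))"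
    if "t < length h" for t
    using nxt_wf[OF chi, of "take t h" "fst (h!t)" "fst (snd (h!t))"] r that unfolding reach_def by auto
  have "distinct (map fst h)"
    unfolding distinct_conv_nth
  proof (intro allI impI)
    fix i j assume i: "i < length (map fst h)" and j: "j < length (map fst h)" and ij: "i \<noteq> j"
    show "map fst h ! i \<noteq> map fst h ! j"
    proof (cases "i < j")
      case True
      have "h ! i \<in> set (take j h)" using True j by (simp add: in_set_conv_nth) (metis length_take min.absorb4 nth_take  True)
      then have m: "fst (h!i) \<in> fst ` set (take j h)" by blast
      have "fst (h!j) \<notin> fst ` set (take j h)" using st[of j] j by simp
      then have "fst (h!i) \<noteq> fst (h!j)" using m by metis
      then show ?thesis using i j by simp
    next
      case False
      then have "j < i" using ij by simp
      have "h ! j \<in> set (take i h)" using \<open>j < i\<close> i by (simp add: in_set_conv_nth) (metis length_take min.absorb4 nth_take \<open>j < i\<close>)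
      then have m: "fst (h!j) \<in> fst ` set (take i h)" by blast
      have "fst (h!i) \<notin> fst ` set (take i h)" using st[of i] i by simp
      then have "fst (h!j) \<noteq> fst (h!i)" using m by metis
      then show ?thesis using i j by simp
    qed
  qed
  moreover have "\<forall>p\<in>set h. fst p < k \<and> fst (snd p) < nIn (fst p) \<and> snd (snd p) < nOut (fst p)"
  proof
    fix p assume "p \<in> set h"
    then obtain t where t: "t < length h" "p = h ! t" by (auto simp: in_set_conv_nth)
    then show "fst p < k \<and> fst (snd p) < nIn (fst p) \<and> snd (snd p) < nOut (fst p)" using st[OF t(1)] by simp
  qed
  ultimately show ?thesis by blast
qed

lemma reach_length:
  assumes chi: "chi < nIn'" and r: "reach nOut nxt chi h"
  shows "length h \<le> k"
proof -
  have d: "distinct (map fst h)" and s: "set (map fst h) \<subseteq> {..<k}" using reach_props[OF chi r] by auto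
  have "length h = card (set (map fst h))" using distinct_card[OF d] by simp
  also have "\<dots> \<le> card {..<k}" using s by (intro card_mono) auto
  finally show ?thesis by simp
qed

definition Bset where "Bset = Sigma {..<k} (\<lambda>i. {..<nIn i} \<times> {..<nOut i})"

lemma finite_reach:
  assumes chi: "chi < nIn'"
  shows "finite {h. reach nOut nxt chi h}"
proof -
  have "{h. reach nOut nxt chi h} \<subseteq> {h. set h \<subseteq> Bset \<and> length h \<le> k}"
    using reach_props[OF chi] reach_length[OF chi] unfolding Bset_def by fastforce
  moreover have "finite {h. set h \<subseteq> Bset \<and> length h \<le> k}"
    by (rule finite_lists_length_le) (auto simp: Bset_def)
  ultimately show ?thesis by (rule finite_subset)
qed

lemma finite_complete:
  assumes chi: "chi < nIn'"
  shows "finite {h. complete_hist nOut nxt chi h}"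
  by (rule finite_subset[OF _ finite_reach[OF chi]]) (auto simp: complete_reach)

lemma reach_snoc:
  assumes "reach nOut nxt chi h" "nxt chi h = Some (i, x)" "a < nOut i"
  shows "reach nOut nxt chi (h @ [(i, (x, a))])"
  using assms unfolding reach_def
  by (auto simp: nth_append less_Suc_eq)

lemma ext_None:
  assumes r: "reach nOut nxt chi h" and n: "nxt chi h = None"
  shows "{h'. complete_hist nOut nxt chi h' \<and> take (length h) h' = h} = {h}"
proof
  show "{h} \<subseteq> {h'. complete_hist nOut nxt chi h' \<and> take (length h) h' = h}"
    using r n by (simp add: complete_reach)
  show "{h'. complete_hist nOut nxt chi h' \<and> take (length h) h' = h} \<subseteq> {h}"
  proof
    fix h' assume "h' \<in> {h'. complete_hist nOut nxt chi h' \<and> take (length h) h' = h}"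
    then have c: "complete_hist nOut nxt chi h'" and t: "take (length h) h' = h" by auto
    show "h' \<in> {h}"
    proof (cases "length h < length h'")
      case True
      then have "nxt chi (take (length h) h') \<noteq> None" using c unfolding complete_reach reach_def by auto
      then show ?thesis using t n by simp
    next
      case False
      then show ?thesis using t by simp
    qed
  qed
qed

lemma ext_Some:
  assumes r: "reach nOut nxt chi h" and n: "nxt chi h = Some (i, x)"
  shows "{h'. complete_hist nOut nxt chi h' \<and> take (length h) h' = h}
     = (\<Union>a\<in>{..<nOut i}. {h'. complete_hist nOut nxt chi h' \<and> take (length (h @ [(i, (x, a))])) h' = h @ [(i, (x, a))]})"
proof
  show "{h'. complete_hist nOut nxt chi h' \<and> take (length h) h' = h} \<subseteq> (\<Union>a\<in>{..<nOut i}. {h'. complete_hist nOut nxt chi h' \<and> take (length (h @ [(i, (x, a))])) h' = h @ [(i, (x, a))]})"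
  proof
    fix h' assume "h' \<in> {h'. complete_hist nOut nxt chi h' \<and> take (length h) h' = h}"
    then have c: "complete_hist nOut nxt chi h'" and t: "take (length h) h' = h" by auto
    have lt: "length h < length h'"
    proof (rule ccontr)
      assume "\<not> length h < length h'"
      then have "h' = h" using t by simp
      then show False using c n by (simp add: complete_reach)
    qed
    have R: "nxt chi (take (length h) h') = Some (fst (h' ! length h), fst (snd (h' ! length h)))"
      and O: "snd (snd (h' ! length h)) < nOut (fst (h' ! length h))"
      using c lt unfolding complete_reach reach_def by auto
    then have e: "h' ! length h = (i, (x, snd (snd (h' ! length h))))" using t n by (cases "h' ! length h") auto
    have "take (Suc (length h)) h' = h @ [h' ! length h]" using lt t by (simp add: take_Suc_conv_app_nth)
    moreover have fi: "fst (h' ! length h) = i" by (subst e) simp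
    ultimately have tk: "take (length (h @ [(i, (x, snd (snd (h' ! length h))))])) h' = h @ [(i, (x, snd (snd (h' ! length h))))]"
      using e by simp
    have a: "snd (snd (h' ! length h)) \<in> {..<nOut i}" using O fi by simp
    show "h' \<in> (\<Union>a\<in>{..<nOut i}. {h'. complete_hist nOut nxt chi h' \<and> take (length (h @ [(i, (x, a))])) h' = h @ [(i, (x, a))]})"
      using c tk a by blast
  qed
  show "(\<Union>a\<in>{..<nOut i}. {h'. complete_hist nOut nxt chi h' \<and> take (length (h @ [(i, (x, a))])) h' = h @ [(i, (x, a))]}) \<subseteq> {h'. complete_hist nOut nxt chi h' \<and> take (length h) h' = h}"
  proof clarify
    fix a h' assume "a < nOut i" "complete_hist nOut nxt chi h'" and t: "take (length (h @ [(i, x, a)])) h' = h @ [(i, x, a)]"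
    have "take (length h) h' = take (length h) (take (length (h @ [(i, x, a)])) h')" by simp
    then show "take (length h) h' = h" unfolding t by simp
  qed
qed

lemma map_of_snoc: "i \<notin> fst ` set h \<Longrightarrow> map_of (h @ [(i, v)]) j = (if j = i then Some v else map_of h j)"
  by (induction h) auto

lemma tree_sum:
  assumes chi: "chi < nIn'"
    and hyp: "\<forall>i<k. \<forall>x<nIn i. (\<Sum>a<nOut i. f i (Some (x, a))) = (f i None :: real)"
  shows "reach nOut nxt chi h \<Longrightarrow>
    (\<Sum>h'\<in>{h'. complete_hist nOut nxt chi h' \<and> take (length h) h' = h}. \<Prod>i<k. f i (map_of h' i))
      = (\<Prod>i<k. f i (map_of h i))"
proof (induction "k - length h" arbitrary: h rule: less_induct)
  case less
  show ?case
  proof (cases "nxt chi h")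
    case None
    then show ?thesis using ext_None[OF less.prems] by simp
  next
    case (Some ix)
    obtain i x where ix: "ix = (i, x)" by (cases ix)
    have n: "nxt chi h = Some (i, x)" using Some ix by simp
    have wi: "i < k" "i \<notin> fst ` set h" "x < nIn i" using nxt_wf[OF chi n] by auto
    define E where "E a = {h'. complete_hist nOut nxt chi h' \<and> take (length (h @ [(i, (x, a))])) h' = h @ [(i, (x, a))]}" for a
    have rs: "reach nOut nxt chi (h @ [(i, (x, a))])" if "a < nOut i" for a using reach_snoc[OF less.prems n that] .
    have IH: "(\<Sum>h'\<in>E a. \<Prod>j<k. f j (map_of h' j)) = (\<Prod>j<k. f j (map_of (h @ [(i, (x, a))]) j))" if a: "a < nOut i" for a
    proof -
      have "length (h @ [(i, (x, a))]) \<le> k" using reach_length[OF chi rs[OF a]] .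
      then have "k - length (h @ [(i, (x, a))]) < k - length h" by simp
      then show ?thesis unfolding E_def using less.hyps rs[OF a] by blast
    qed
    have finE: "finite (E a)" for a
      unfolding E_def by (rule finite_subset[OF _ finite_complete[OF chi]]) auto
    have disj: "E a \<inter> E b = {}" if "a \<noteq> b" for a b
    proof -
      have H: "h' ! length h = (i, (x, a))" if "h' \<in> E a" for h' a
      proof -
        have "take (Suc (length h)) h' = h @ [(i, (x, a))]" using that unfolding E_def by simp
        then have "(take (Suc (length h)) h') ! length h = (i, (x, a))" by simp
        then show ?thesis by simp
      qed
      {
        fix h' assume "h' \<in> E a" "h' \<in> E b"
        then have "(i, (x, a)) = (i, (x, b))" using H by metis
        then have False using that by simp
      }
      then show ?thesis by blast
    qed
    have "(\<Sum>h'\<in>{h'. complete_hist nOut nxt chi h' \<and> take (length h) h' = h}. \<Prod>j<k. f j (map_of h' j))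
        = (\<Sum>h'\<in>(\<Union>a\<in>{..<nOut i}. E a). \<Prod>j<k. f j (map_of h' j))"
      unfolding ext_Some[OF less.prems n] E_def ..
    also have "\<dots> = (\<Sum>a<nOut i. \<Sum>h'\<in>E a. \<Prod>j<k. f j (map_of h' j))"
      by (rule sum.UNION_disjoint) (auto simp: finE disj)
    also have "\<dots> = (\<Sum>a<nOut i. \<Prod>j<k. f j (map_of (h @ [(i, (x, a))]) j))"
      by (intro sum.cong refl) (simp add: IH)
    also have "\<dots> = (\<Sum>a<nOut i. f i (Some (x, a)) * (\<Prod>j\<in>{..<k} - {i}. f j (map_of h j)))"
    proof (intro sum.cong refl)
      fix a
      have "(\<Prod>j<k. f j (map_of (h @ [(i, (x, a))]) j)) = f i (map_of (h @ [(i, (x, a))]) i) * (\<Prod>j\<in>{..<k} - {i}. f j (map_of (h @ [(i, (x, a))]) j))"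
        using wi(1) by (subst prod.remove[of _ i]) auto
      also have "\<dots> = f i (Some (x, a)) * (\<Prod>j\<in>{..<k} - {i}. f j (map_of h j))"
      proof -
        have "(\<Prod>j\<in>{..<k} - {i}. f j (map_of (h @ [(i, (x, a))]) j)) = (\<Prod>j\<in>{..<k} - {i}. f j (map_of h j))"
          by (intro prod.cong refl) (simp add: map_of_snoc[OF wi(2)] del: map_of_append)
        moreover have "map_of (h @ [(i, (x, a))]) i = Some (x, a)" by (simp add: map_of_snoc[OF wi(2)] del: map_of_append)
        ultimately show ?thesis by simp
      qed
      finally show "(\<Prod>j<k. f j (map_of (h @ [(i, (x, a))]) j)) = f i (Some (x, a)) * (\<Prod>j\<in>{..<k} - {i}. f j (map_of h j))" .
    qed
    also have "\<dots> = f i None * (\<Prod>j\<in>{..<k} - {i}. f j (map_of h j))"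
      using hyp wi by (simp add: sum_distrib_right[symmetric])
    also have "\<dots> = (\<Prod>j<k. f j (map_of h j))"
    proof -
      have "(\<Prod>j<k. f j (map_of h j)) = f i (map_of h i) * (\<Prod>j\<in>{..<k} - {i}. f j (map_of h j))"
        using wi(1) by (intro prod.remove) auto
      moreover have "map_of h i = None" using wi(2) by (simp add: map_of_eq_None_iff)
      ultimately show ?thesis by simp
    qed
    finally show ?thesis .
  qed
qed

lemma tree_sum0:
  assumes chi: "chi < nIn'"
    and hyp: "\<forall>i<k. \<forall>x<nIn i. (\<Sum>a<nOut i. f i (Some (x, a))) = (f i None :: real)"
  shows "(\<Sum>h\<in>{h. complete_hist nOut nxt chi h}. \<Prod>i<k. f i (map_of h i)) = (\<Prod>i<k. f i None)"
  using tree_sum[OF chi hyp reach_Nil] by simp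

lemma diverge:
  assumes chi: "chi < nIn'" and c: "complete_hist nOut nxt chi h" and c': "complete_hist nOut nxt chi h'" and ne: "h \<noteq> h'"
  shows "\<exists>t. t < length h \<and> t < length h' \<and> fst (h!t) = fst (h'!t) \<and> fst (snd (h!t)) = fst (snd (h'!t))
            \<and> snd (snd (h!t)) \<noteq> snd (snd (h'!t))"
proof (cases "\<exists>t. t < length h \<and> t < length h' \<and> h!t \<noteq> h'!t")
  case True
  define t0 where "t0 = (LEAST t. t < length h \<and> t < length h' \<and> h!t \<noteq> h'!t)"
  have P: "t0 < length h \<and> t0 < length h' \<and> h!t0 \<noteq> h'!t0"
    unfolding t0_def using True by (metis (mono_tags, lifting) LeastI)
  have before: "h!t = h'!t" if "t < t0" for t
    using not_less_Least[OF that[unfolded t0_def]] P that by auto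
  have tk: "take t0 h = take t0 h'"
    by (rule nth_equalityI) (use P before in auto)
  have "nxt chi (take t0 h) = Some (fst (h!t0), fst (snd (h!t0)))" using c P unfolding complete_reach reach_def by auto
  moreover have "nxt chi (take t0 h') = Some (fst (h'!t0), fst (snd (h'!t0)))" using c' P unfolding complete_reach reach_def by auto
  ultimately have "fst (h!t0) = fst (h'!t0)" "fst (snd (h!t0)) = fst (snd (h'!t0))" using tk by auto
  moreover have "snd (snd (h!t0)) \<noteq> snd (snd (h'!t0))" using P calculation by (auto simp: prod_eq_iff)
  ultimately show ?thesis using P by blast
next
  case False
  have pre: "\<And>t. t < length h \<Longrightarrow> t < length h' \<Longrightarrow> h!t = h'!t" using False by blast
  show ?thesis
  proof (cases "length h < length h'")
    case True
    have "take (length h) h' = h" by (rule nth_equalityI) (use True pre in auto)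
    moreover have "nxt chi (take (length h) h') \<noteq> None" using c' True unfolding complete_reach reach_def by auto
    ultimately show ?thesis using c unfolding complete_reach by simp
  next
    case F: False
    show ?thesis
    proof (cases "length h' < length h")
      case True
      have "take (length h') h = h'" by (rule nth_equalityI) (use True pre in auto)
      moreover have "nxt chi (take (length h') h) \<noteq> None" using c True unfolding complete_reach reach_def by auto
      ultimately show ?thesis using c' unfolding complete_reach by simp
    next
      case False
      then have "length h = length h'" using F by simp
      then have "h = h'" by (rule nth_equalityI) (use pre \<open>length h = length h'\<close> in auto)
      then show ?thesis using ne by simp
    qed
  qed
qed

lemma diverge_bl:
  assumes chi: "chi < nIn'" and c: "complete_hist nOut nxt chi h" and c': "complete_hist nOut nxt chi h'" and ne: "h \<noteq> h'"
  shows "\<exists>i<k. \<exists>p q. bl i h = [p] \<and> bl i h' = [q] \<and> fst p = fst q \<and> p \<noteq> q"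
proof -
  obtain t where t: "t < length h" "t < length h'" "fst (h!t) = fst (h'!t)" "fst (snd (h!t)) = fst (snd (h'!t))"
    "snd (snd (h!t)) \<noteq> snd (snd (h'!t))" using diverge[OF assms] by blast
  have r: "reach nOut nxt chi h" "reach nOut nxt chi h'" using c c' by (auto simp: complete_reach)
  have d: "distinct (map fst h)" "distinct (map fst h')" using reach_props[OF chi r(1)] reach_props[OF chi r(2)] by auto
  have ik: "fst (h!t) < k" using reach_props[OF chi r(1)] t(1) by (auto dest: nth_mem)
  have m1: "map_of h (fst (h!t)) = Some (snd (h!t))"
    using nth_mem[OF t(1)] by (simp add: map_of_eq_Some_iff[OF d(1)])
  have m2: "map_of h' (fst (h!t)) = Some (snd (h'!t))"
    using nth_mem[OF t(2)] t(3) by (simp add: map_of_eq_Some_iff[OF d(2)])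
  show ?thesis
    using ik m1 m2 t bl_map_of[OF d(1)] bl_map_of[OF d(2)] by (intro exI[of _ "fst (h!t)"]) (auto simp: prod_eq_iff)
qed

lemma bl_len: "chi < nIn' \<Longrightarrow> reach nOut nxt chi h \<Longrightarrow> length (bl i h) \<le> 1"
  using reach_props bl_map_of by (auto split: option.splits)

lemma bl_range: "chi < nIn' \<Longrightarrow> reach nOut nxt chi h \<Longrightarrow> i < k \<Longrightarrow> set (bl i h) \<subseteq> {0..<nIn i} \<times> {0..<nOut i}"
  using reach_props[of chi h] unfolding bl_def by auto

end


definition Tset :: "(nat \<Rightarrow> nat) \<Rightarrow> (nat \<Rightarrow> hist \<Rightarrow> (nat \<times> nat) option) \<Rightarrow> (nat \<Rightarrow> hist \<Rightarrow> nat) \<Rightarrow> (nat \<times> nat) list \<Rightarrow> hist list set" where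
  "Tset nOut nxt out xs = {\<tau>. list_all2 (\<lambda>x h. complete_hist nOut nxt (fst x) h \<and> out (fst x) h = snd x) xs \<tau>}"

definition bw :: "nat \<Rightarrow> hist list \<Rightarrow> (nat \<times> nat) list" where
  "bw i \<tau> = concat (map (bl i) \<tau>)"

lemma bw_simps[simp]: "bw i [] = []" "bw i (h # \<tau>) = bl i h @ bw i \<tau>" "bw i (a @ b) = bw i a @ bw i b"
  by (simp_all add: bw_def)

context party begin

definition Cs where "Cs x = {h. complete_hist nOut nxt (fst x) h \<and> out (fst x) h = snd x}"

lemma Tset_Nil: "Tset nOut nxt out [] = {[]}"
  by (auto simp: Tset_def)

lemma Tset_Cons: "Tset nOut nxt out (x # xs) = (\<lambda>(h, \<tau>). h # \<tau>) ` (Cs x \<times> Tset nOut nxt out xs)"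
  by (auto simp: Tset_def Cs_def list_all2_Cons1)

lemma Tset_append: "Tset nOut nxt out (u @ v) = (\<lambda>(a, b). a @ b) ` (Tset nOut nxt out u \<times> Tset nOut nxt out v)"
proof
  show "Tset nOut nxt out (u @ v) \<subseteq> (\<lambda>(a, b). a @ b) ` (Tset nOut nxt out u \<times> Tset nOut nxt out v)"
    by (auto simp: Tset_def list_all2_append1 image_iff)
  show "(\<lambda>(a, b). a @ b) ` (Tset nOut nxt out u \<times> Tset nOut nxt out v) \<subseteq> Tset nOut nxt out (u @ v)"
    by (auto simp: Tset_def intro!: list_all2_appendI)
qed

lemma Tset_length: "\<tau> \<in> Tset nOut nxt out xs \<Longrightarrow> length \<tau> = length xs"
  by (auto simp: Tset_def dest: list_all2_lengthD)

lemma finite_Cs: "fst x < nIn' \<Longrightarrow> finite (Cs x)"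
  unfolding Cs_def by (rule finite_subset[OF _ finite_complete]) auto

lemma Cs_complete: "h \<in> Cs x \<Longrightarrow> complete_hist nOut nxt (fst x) h"
  unfolding Cs_def by auto

lemma Cs_out: "h \<in> Cs x \<Longrightarrow> out (fst x) h = snd x"
  unfolding Cs_def by auto

lemma finite_Tset: "\<forall>p\<in>set xs. fst p < nIn' \<Longrightarrow> finite (Tset nOut nxt out xs)"
  by (induction xs) (auto simp: Tset_Nil Tset_Cons finite_Cs)

lemma sum_Tset_append:
  assumes "\<forall>p\<in>set (u @ v). fst p < nIn'"
  shows "(\<Sum>\<tau>\<in>Tset nOut nxt out (u @ v). G \<tau>) = (\<Sum>a\<in>Tset nOut nxt out u. \<Sum>b\<in>Tset nOut nxt out v. (G (a @ b) :: real))"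
proof -
  have inj: "inj_on (\<lambda>(a, b). a @ b) (Tset nOut nxt out u \<times> Tset nOut nxt out v)"
    by (auto simp: inj_on_def Tset_length)
  have "(\<Sum>\<tau>\<in>Tset nOut nxt out (u @ v). G \<tau>) = (\<Sum>(a, b)\<in>Tset nOut nxt out u \<times> Tset nOut nxt out v. G (a @ b))"
    unfolding Tset_append by (subst sum.reindex[OF inj]) (simp add: case_prod_beta)
  also have "\<dots> = (\<Sum>a\<in>Tset nOut nxt out u. \<Sum>b\<in>Tset nOut nxt out v. G (a @ b))"
    by (rule sum.cartesian_product[symmetric])
  finally show ?thesis .
qed

lemma sum_Tset_Cons:
  shows "(\<Sum>\<tau>\<in>Tset nOut nxt out (x # v). G \<tau>) = (\<Sum>h\<in>Cs x. \<Sum>b\<in>Tset nOut nxt out v. (G (h # b) :: real))"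
proof -
  have inj: "inj_on (\<lambda>(h, b). h # b) (Cs x \<times> Tset nOut nxt out v)"
    by (auto simp: inj_on_def)
  have "(\<Sum>\<tau>\<in>Tset nOut nxt out (x # v). G \<tau>) = (\<Sum>(h, b)\<in>Cs x \<times> Tset nOut nxt out v. G (h # b))"
    unfolding Tset_Cons by (subst sum.reindex[OF inj]) (simp add: case_prod_beta)
  also have "\<dots> = (\<Sum>h\<in>Cs x. \<Sum>b\<in>Tset nOut nxt out v. G (h # b))"
    by (rule sum.cartesian_product[symmetric])
  finally show ?thesis .
qed

definition goodF :: "((nat \<Rightarrow> (nat \<times> nat) list) \<Rightarrow> real) \<Rightarrow> bool" where
  "goodF F \<longleftrightarrow> (\<forall>ws. (\<exists>i<k. \<not> adjok (ws i)) \<longrightarrow> F ws = 0) \<and>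
     (\<forall>ws ws'. (\<forall>i<k. red (ws i) = red (ws' i)) \<longrightarrow> F ws = F ws')"

lemma goodF_zero: "goodF F \<Longrightarrow> i < k \<Longrightarrow> \<not> adjok (ws i) \<Longrightarrow> F ws = 0"
  unfolding goodF_def by blast

lemma goodF_eq: "goodF F \<Longrightarrow> (\<And>i. i < k \<Longrightarrow> red (ws i) = red (ws' i)) \<Longrightarrow> F ws = F ws'"
  unfolding goodF_def by blast

lemma conflict_zero:
  assumes F: "goodF F" and chi: "chi < nIn'" and h: "complete_hist nOut nxt chi h" and h': "complete_hist nOut nxt chi h'" and ne: "h \<noteq> h'"
  shows "F (\<lambda>i. bw i a @ bl i h @ bl i h' @ bw i b) = 0"
proof -
  obtain i p q where i: "i < k" "bl i h = [p]" "bl i h' = [q]" "fst p = fst q" "p \<noteq> q"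
    using diverge_bl[OF chi h h' ne] by blast
  have "\<not> adjok (bw i a @ bl i h @ bl i h' @ bw i b)"
    using i adjok_conflict[of p q "bw i a" "bw i b"] by simp
  then show ?thesis by (intro goodF_zero[OF F i(1)]) simp
qed

lemma S_dup:
  assumes F: "goodF F" and rng: "\<forall>p\<in>set (u @ x # v). fst p < nIn'"
  shows "(\<Sum>\<tau>\<in>Tset nOut nxt out (u @ x # x # v). F (\<lambda>i. bw i \<tau>)) = (\<Sum>\<tau>\<in>Tset nOut nxt out (u @ x # v). F (\<lambda>i. bw i \<tau>))"
proof -
  have chi: "fst x < nIn'" using rng by simp
  have r1: "\<forall>p\<in>set (u @ x # x # v). fst p < nIn'" using rng by auto
  have fT: "finite (Tset nOut nxt out v)" using rng by (intro finite_Tset) auto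
  have inner: "(\<Sum>h'\<in>Cs x. \<Sum>b\<in>Tset nOut nxt out v. F (\<lambda>i. bw i (a @ h # h' # b)))
      = (\<Sum>b\<in>Tset nOut nxt out v. F (\<lambda>i. bw i (a @ h # b)))" if h: "h \<in> Cs x" for a h
  proof -
    have "(\<Sum>h'\<in>Cs x. \<Sum>b\<in>Tset nOut nxt out v. F (\<lambda>i. bw i (a @ h # h' # b)))
       = (\<Sum>b\<in>Tset nOut nxt out v. F (\<lambda>i. bw i (a @ h # h # b))) + (\<Sum>h'\<in>Cs x - {h}. \<Sum>b\<in>Tset nOut nxt out v. F (\<lambda>i. bw i (a @ h # h' # b)))"
      using h finite_Cs[OF chi] by (subst sum.remove) auto
    also have "(\<Sum>h'\<in>Cs x - {h}. \<Sum>b\<in>Tset nOut nxt out v. F (\<lambda>i. bw i (a @ h # h' # b))) = 0"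
      using conflict_zero[OF F chi Cs_complete[OF h] Cs_complete] by (intro sum.neutral ballI sum.neutral) auto
    also have "(\<Sum>b\<in>Tset nOut nxt out v. F (\<lambda>i. bw i (a @ h # h # b))) = (\<Sum>b\<in>Tset nOut nxt out v. F (\<lambda>i. bw i (a @ h # b)))"
    proof (intro sum.cong refl)
      fix b
      have "red (bw i a @ bl i h @ bl i h @ bw i b) = red (bw i a @ bl i h @ bw i b)" for i
        by (rule red_dup) (rule bl_len[OF chi], use Cs_complete[OF h] in \<open>simp add: complete_reach\<close>)
      then show "F (\<lambda>i. bw i (a @ h # h # b)) = F (\<lambda>i. bw i (a @ h # b))"
        by (intro goodF_eq[OF F]) simp
    qed
    finally show ?thesis by simp
  qed
  have "(\<Sum>\<tau>\<in>Tset nOut nxt out (u @ x # x # v). F (\<lambda>i. bw i \<tau>))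
      = (\<Sum>a\<in>Tset nOut nxt out u. \<Sum>c\<in>Tset nOut nxt out (x # x # v). F (\<lambda>i. bw i (a @ c)))"
    by (rule sum_Tset_append[OF r1])
  also have "\<dots> = (\<Sum>a\<in>Tset nOut nxt out u. \<Sum>h\<in>Cs x. \<Sum>h'\<in>Cs x. \<Sum>b\<in>Tset nOut nxt out v. F (\<lambda>i. bw i (a @ h # h' # b)))"
    by (simp add: sum_Tset_Cons)
  also have "\<dots> = (\<Sum>a\<in>Tset nOut nxt out u. \<Sum>h\<in>Cs x. \<Sum>b\<in>Tset nOut nxt out v. F (\<lambda>i. bw i (a @ h # b)))"
    by (rule sum.cong[OF refl], rule sum.cong[OF refl], rule inner, simp)
  also have "\<dots> = (\<Sum>a\<in>Tset nOut nxt out u. \<Sum>c\<in>Tset nOut nxt out (x # v). F (\<lambda>i. bw i (a @ c)))"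
    by (simp add: sum_Tset_Cons)
  also have "\<dots> = (\<Sum>\<tau>\<in>Tset nOut nxt out (u @ x # v). F (\<lambda>i. bw i \<tau>))"
    by (rule sum_Tset_append[symmetric, OF rng])
  finally show ?thesis .
qed

lemma S_zero:
  assumes F: "goodF F" and rng: "\<forall>p\<in>set xs. fst p < nIn'" and na: "\<not> adjok xs"
  shows "(\<Sum>\<tau>\<in>Tset nOut nxt out xs. F (\<lambda>i. bw i \<tau>)) = 0"
proof -
  obtain n where n: "Suc n < length xs" "fst (xs!n) = fst (xs!Suc n)" "xs!n \<noteq> xs!Suc n"
    using na unfolding not_adjok_nth by blast
  define u where "u = take n xs"
  define v where "v = drop (Suc (Suc n)) xs"
  define x where "x = xs ! n"
  define y where "y = xs ! Suc n"
  have xs: "xs = u @ x # y # v"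
    unfolding u_def v_def x_def y_def using n(1)
    by (simp add: Cons_nth_drop_Suc)
  have rng': "\<forall>p\<in>set (u @ x # y # v). fst p < nIn'" using rng xs by simp
  have chi: "fst x < nIn'" using rng' by simp
  have "(\<Sum>\<tau>\<in>Tset nOut nxt out (u @ x # y # v). F (\<lambda>i. bw i \<tau>))
      = (\<Sum>a\<in>Tset nOut nxt out u. \<Sum>h\<in>Cs x. \<Sum>h'\<in>Cs y. \<Sum>b\<in>Tset nOut nxt out v. F (\<lambda>i. bw i (a @ h # h' # b)))"
    by (simp add: sum_Tset_append[OF rng'] sum_Tset_Cons)
  also have "\<dots> = 0"
  proof (intro sum.neutral ballI)
    fix a h h' b assume h: "h \<in> Cs x" and h': "h' \<in> Cs y"
    have fy: "fst y = fst x" using n(2) unfolding x_def y_def by simp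
    have h'c: "complete_hist nOut nxt (fst x) h'" using Cs_complete[OF h'] fy by simp
    have ne: "h \<noteq> h'"
    proof
      assume "h = h'"
      have o1: "out (fst x) h = snd x" by (rule Cs_out[OF h])
      have o2: "out (fst x) h' = snd y" using Cs_out[OF h'] fy by simp
      from \<open>h = h'\<close> o1 o2 have "snd x = snd y" by simp
      then show False using n(2,3) fy unfolding x_def y_def by (simp add: prod_eq_iff)
    qed
    have "F (\<lambda>i. bw i a @ bl i h @ bl i h' @ bw i b) = 0"
      by (rule conflict_zero[OF F chi Cs_complete[OF h] h'c ne])
    then show "F (\<lambda>i. bw i (a @ h # h' # b)) = 0" by simp
  qed
  finally show ?thesis using xs by simp
qed

lemma S_remdups:
  assumes F: "goodF F"
  shows "\<forall>p\<in>set xs. fst p < nIn' \<Longrightarrow> (\<Sum>\<tau>\<in>Tset nOut nxt out xs. F (\<lambda>i. bw i \<tau>)) = (\<Sum>\<tau>\<in>Tset nOut nxt out (remdups_adj xs). F (\<lambda>i. bw i \<tau>))"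
proof (induction "length xs" arbitrary: xs rule: less_induct)
  case less
  show ?case
  proof (cases "\<exists>n. Suc n < length xs \<and> xs!n = xs!Suc n")
    case True
    then obtain n where n: "Suc n < length xs" "xs!n = xs!Suc n" by blast
    define u where "u = take n xs"
    define v where "v = drop (Suc (Suc n)) xs"
    define x where "x = xs ! n"
    have xs: "xs = u @ x # x # v"
      unfolding u_def v_def x_def using n
      by (metis Cons_nth_drop_Suc Suc_lessD append_take_drop_id)
    have rng: "\<forall>p\<in>set (u @ x # v). fst p < nIn'" using less.prems xs by auto
    have "(\<Sum>\<tau>\<in>Tset nOut nxt out xs. F (\<lambda>i. bw i \<tau>)) = (\<Sum>\<tau>\<in>Tset nOut nxt out (u @ x # v). F (\<lambda>i. bw i \<tau>))"
      using S_dup[OF F rng] xs by simp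
    also have "\<dots> = (\<Sum>\<tau>\<in>Tset nOut nxt out (remdups_adj (u @ x # v)). F (\<lambda>i. bw i \<tau>))"
      using less.hyps[of "u @ x # v"] xs rng by simp
    also have "remdups_adj (u @ x # v) = remdups_adj xs" by (simp add: xs remdups_adj_dup)
    finally show ?thesis .
  next
    case False
    then have "remdups_adj xs = xs" by (intro remdups_adj_id) auto
    then show ?thesis by simp
  qed
qed

end


definition LSf :: "(word \<Rightarrow> real) \<Rightarrow> word \<Rightarrow> real" where
  "LSf L m = (L m + L (wadj m)) / 2"

lemma evL_LSf: "evL (LSf L) w = (evL L w + evL L (wadj w)) / 2"
  by (auto simp: evL_def LSf_def red_word_wadj split: option.splits)

lemma evL_LSf_wadj: "evL (LSf L) (wadj w) = evL (LSf L) w"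
  by (simp add: evL_LSf)

lemma wadj_single: "wadj (u, v) = (u, v) \<Longrightarrow> evL (LSf L) (u, v) = evL L (u, v)"
  by (simp add: evL_LSf)

lemma LSf_pos:
  assumes pos: "\<forall>W c. finite W \<and> W \<subseteq> Os \<longrightarrow> 0 \<le> (\<Sum>u\<in>W. \<Sum>v\<in>W. c u * c v * evL L (wmult u (wadj v)))"
  shows "\<forall>W c. finite W \<and> W \<subseteq> Os \<longrightarrow> 0 \<le> (\<Sum>u\<in>W. \<Sum>v\<in>W. c u * c v * evL (LSf L) (wmult u (wadj v)))"
proof (intro allI impI)
  fix W c assume a: "finite W \<and> W \<subseteq> Os"
  have e: "c u * c v * evL (LSf L) (wmult u (wadj v)) = (c u * c v * evL L (wmult u (wadj v))) / 2 + (c u * c v * evL L (wmult v (wadj u))) / 2" for u v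
    unfolding evL_LSf wadj_wmult by (simp add: add_divide_distrib ring_distribs)
  have "(\<Sum>u\<in>W. \<Sum>v\<in>W. c u * c v * evL (LSf L) (wmult u (wadj v)))
     = (\<Sum>u\<in>W. \<Sum>v\<in>W. c u * c v * evL L (wmult u (wadj v))) / 2 + (\<Sum>u\<in>W. \<Sum>v\<in>W. c u * c v * evL L (wmult v (wadj u))) / 2"
    unfolding e sum.distrib sum_divide_distrib by (rule refl)
  also have "(\<Sum>u\<in>W. \<Sum>v\<in>W. c u * c v * evL L (wmult v (wadj u))) = (\<Sum>u\<in>W. \<Sum>v\<in>W. c u * c v * evL L (wmult u (wadj v)))"
    by (subst sum.swap) (simp add: mult.commute)
  finally have eq: "(\<Sum>u\<in>W. \<Sum>v\<in>W. c u * c v * evL (LSf L) (wmult u (wadj v))) = (\<Sum>u\<in>W. \<Sum>v\<in>W. c u * c v * evL L (wmult u (wadj v))) / 2 + (\<Sum>u\<in>W. \<Sum>v\<in>W. c u * c v * evL L (wmult u (wadj v))) / 2" .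
  have "0 \<le> (\<Sum>u\<in>W. \<Sum>v\<in>W. c u * c v * evL L (wmult u (wadj v)))" using pos[rule_format, of W c] a by simp
  then show "0 \<le> (\<Sum>u\<in>W. \<Sum>v\<in>W. c u * c v * evL (LSf L) (wmult u (wadj v)))" unfolding eq by simp
qed

lemma is_box_nonneg: assumes "is_box nX nA nY nB P" "a < nA" "b < nB" "x < nX" "y < nY" shows "0 \<le> P a b x y"
proof -
  have H: "\<forall>a<nA. \<forall>b<nB. \<forall>x<nX. \<forall>y<nY. 0 \<le> P a b x y" by (insert assms(1), unfold is_box_def, elim conjE, assumption)
  show ?thesis by (rule H[rule_format, OF assms(2-5)])
qed
lemma is_box_norm: assumes "is_box nX nA nY nB P" "x < nX" "y < nY" shows "(\<Sum>a<nA. \<Sum>b<nB. P a b x y) = 1"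
proof -
  have H: "\<forall>x<nX. \<forall>y<nY. (\<Sum>a<nA. \<Sum>b<nB. P a b x y) = 1" by (insert assms(1), unfold is_box_def, elim conjE, assumption)
  show ?thesis by (rule H[rule_format, OF assms(2-3)])
qed
lemma is_box_nsA: assumes "is_box nX nA nY nB P" "a < nA" "x < nX" "y < nY" "y' < nY" shows "(\<Sum>b<nB. P a b x y) = (\<Sum>b<nB. P a b x y')"
proof -
  have H: "\<forall>a<nA. \<forall>x<nX. \<forall>y<nY. \<forall>y'<nY. (\<Sum>b<nB. P a b x y) = (\<Sum>b<nB. P a b x y')" by (insert assms(1), unfold is_box_def, elim conjE, assumption)
  show ?thesis by (rule H[rule_format, OF assms(2-5)])
qed
lemma is_box_nsB: assumes "is_box nX nA nY nB P" "b < nB" "y < nY" "x < nX" "x' < nX" shows "(\<Sum>a<nA. P a b x y) = (\<Sum>a<nA. P a b x' y)"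
proof -
  have H: "\<forall>b<nB. \<forall>y<nY. \<forall>x<nX. \<forall>x'<nX. (\<Sum>a<nA. P a b x y) = (\<Sum>a<nA. P a b x' y)" by (insert assms(1), unfold is_box_def, elim conjE, assumption)
  show ?thesis by (rule H[rule_format, OF assms(2-5)])
qed
lemma is_box_pos: "is_box nX nA nY nB P \<Longrightarrow> 0 < nX \<and> 0 < nA \<and> 0 < nY \<and> 0 < nB"
  unfolding is_box_def by blast

definition bfo :: "(nat \<Rightarrow> nat) \<Rightarrow> (nat \<Rightarrow> nat) \<Rightarrow> (nat \<Rightarrow> nat \<Rightarrow> nat \<Rightarrow> nat \<Rightarrow> nat \<Rightarrow> real) \<Rightarrow> nat \<Rightarrow>
   (nat \<times> nat) option \<Rightarrow> (nat \<times> nat) option \<Rightarrow> real" where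
  "bfo nA nB P i eA eB = (case (eA, eB) of
       (Some (x, a), Some (y, b)) \<Rightarrow> P i a b x y
     | (Some (x, a), None) \<Rightarrow> (\<Sum>b<nB i. P i a b x 0)
     | (None, Some (y, b)) \<Rightarrow> (\<Sum>a<nA i. P i a b 0 y)
     | (None, None) \<Rightarrow> 1)"

lemma box_factor_bfo: "box_factor nA nB P hA hB i = bfo nA nB P i (map_of hA i) (map_of hB i)"
  unfolding box_factor_def bfo_def ..

definition ok :: "nat \<Rightarrow> nat \<Rightarrow> (nat \<times> nat) option \<Rightarrow> bool" where
  "ok nI nO e = (case e of None \<Rightarrow> True | Some (x, a) \<Rightarrow> x < nI \<and> a < nO)"

lemma bfo_sumB:
  assumes box: "is_box (nX i) (nA i) (nY i) (nB i) (P i)" and eA: "ok (nX i) (nA i) eA" and y: "y < nY i"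
  shows "(\<Sum>b<nB i. bfo nA nB P i eA (Some (y, b))) = bfo nA nB P i eA None"
proof (cases eA)
  case None
  have "(\<Sum>b<nB i. \<Sum>a<nA i. P i a b 0 y) = (\<Sum>a<nA i. \<Sum>b<nB i. P i a b 0 y)" by (rule sum.swap)
  also have "\<dots> = 1" using is_box_norm[OF box _ y] is_box_pos[OF box] by simp
  finally show ?thesis using None by (simp add: bfo_def)
next
  case (Some e)
  obtain x a where e: "e = (x, a)" by (cases e)
  have "(\<Sum>b<nB i. P i a b x y) = (\<Sum>b<nB i. P i a b x 0)"
    by (rule is_box_nsA[OF box]) (use eA Some e y is_box_pos[OF box] in \<open>auto simp: ok_def\<close>)
  then show ?thesis using Some e by (simp add: bfo_def)
qed

lemma bfo_sumA:
  assumes box: "is_box (nX i) (nA i) (nY i) (nB i) (P i)" and eB: "ok (nY i) (nB i) eB" and x: "x < nX i"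
  shows "(\<Sum>a<nA i. bfo nA nB P i (Some (x, a)) eB) = bfo nA nB P i None eB"
proof (cases eB)
  case None
  have "(\<Sum>a<nA i. \<Sum>b<nB i. P i a b x 0) = 1" using is_box_norm[OF box x, of 0] is_box_pos[OF box] by simp
  then show ?thesis using None by (simp add: bfo_def)
next
  case (Some e)
  obtain y b where e: "e = (y, b)" by (cases e)
  have "(\<Sum>a<nA i. P i a b x y) = (\<Sum>a<nA i. P i a b 0 y)"
    by (rule is_box_nsB[OF box]) (use eB Some e x is_box_pos[OF box] in \<open>auto simp: ok_def\<close>)
  then show ?thesis using Some e by (simp add: bfo_def)
qed

lemma bfo_nonneg:
  assumes box: "is_box (nX i) (nA i) (nY i) (nB i) (P i)" and eA: "ok (nX i) (nA i) eA" and eB: "ok (nY i) (nB i) eB"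
  shows "0 \<le> bfo nA nB P i eA eB"
proof -
  have nn: "\<And>a b x y. a < nA i \<Longrightarrow> b < nB i \<Longrightarrow> x < nX i \<Longrightarrow> y < nY i \<Longrightarrow> 0 \<le> P i a b x y"
    using is_box_nonneg[OF box] by blast
  have p: "0 < nX i" "0 < nY i" using is_box_pos[OF box] by auto
  show ?thesis
  proof (cases eA)
    case None
    then show ?thesis
    proof (cases eB)
      case (Some e) then obtain y b where "e = (y, b)" by (cases e)
      then show ?thesis using None Some eB p nn unfolding bfo_def ok_def by (auto intro!: sum_nonneg)
    qed (simp add: bfo_def)
  next
    case (Some e') then obtain x a where xa: "e' = (x, a)" by (cases e')
    show ?thesis
    proof (cases eB)
      case (Some e) then obtain y b where "e = (y, b)" by (cases e)
      then show ?thesis using \<open>eA = Some e'\<close> xa Some eA eB p nn unfolding bfo_def ok_def by simp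
    next
      case None
      then show ?thesis using \<open>eA = Some e'\<close> xa eA p nn unfolding bfo_def ok_def by (auto intro!: sum_nonneg)
    qed
  qed
qed


context party begin

lemma Tset_rev: "Tset nOut nxt out (rev xs) = rev ` Tset nOut nxt out xs"
proof
  show "Tset nOut nxt out (rev xs) \<subseteq> rev ` Tset nOut nxt out xs"
  proof
    fix \<tau> assume "\<tau> \<in> Tset nOut nxt out (rev xs)"
    then have "rev \<tau> \<in> Tset nOut nxt out xs" by (simp add: Tset_def list_all2_rev1)
    then show "\<tau> \<in> rev ` Tset nOut nxt out xs" by (metis image_eqI rev_rev_ident)
  qed
  show "rev ` Tset nOut nxt out xs \<subseteq> Tset nOut nxt out (rev xs)"
    by (auto simp: Tset_def)
qed

lemma Tset_complete: "\<tau> \<in> Tset nOut nxt out xs \<Longrightarrow> h \<in> set \<tau> \<Longrightarrow> \<exists>x\<in>set xs. complete_hist nOut nxt (fst x) h"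
proof -
  assume a: "\<tau> \<in> Tset nOut nxt out xs" "h \<in> set \<tau>"
  then have la: "list_all2 (\<lambda>x h. complete_hist nOut nxt (fst x) h \<and> out (fst x) h = snd x) xs \<tau>" unfolding Tset_def by simp
  obtain t where t: "t < length \<tau>" "h = \<tau> ! t" using a(2) by (auto simp: in_set_conv_nth)
  have "complete_hist nOut nxt (fst (xs ! t)) (\<tau> ! t)" using list_all2_nthD2[OF la t(1)] by simp
  moreover have "xs ! t \<in> set xs" using t(1) list_all2_lengthD[OF la] by simp
  ultimately show ?thesis using t(2) by blast
qed

lemma Tset_bl_len:
  assumes "\<forall>p\<in>set xs. fst p < nIn'" "\<tau> \<in> Tset nOut nxt out xs" "h \<in> set \<tau>"
  shows "length (bl i h) \<le> 1"
proof -
  obtain x where "x \<in> set xs" "complete_hist nOut nxt (fst x) h" using Tset_complete[OF assms(2,3)] by blast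
  then show ?thesis using assms(1) bl_len by (auto simp: complete_reach)
qed

lemma Tset_bl_range:
  assumes "\<forall>p\<in>set xs. fst p < nIn'" "\<tau> \<in> Tset nOut nxt out xs" "h \<in> set \<tau>" "i < k"
  shows "set (bl i h) \<subseteq> {0..<nIn i} \<times> {0..<nOut i}"
proof -
  obtain x where "x \<in> set xs" "complete_hist nOut nxt (fst x) h" using Tset_complete[OF assms(2,3)] by blast
  then show ?thesis using assms(1,4) bl_range[of "fst x" h i] by (auto simp: complete_reach)
qed

end

lemma bw_rev: "(\<forall>h\<in>set \<tau>. length (bl i h) \<le> 1) \<Longrightarrow> bw i (rev \<tau>) = rev (bw i \<tau>)"
proof (induction \<tau>)
  case Nil then show ?case by simp
next
  case (Cons h \<tau>)
  have "length (bl i h) \<le> 1" using Cons.prems by simp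
  then have "rev (bl i h) = bl i h" by (cases "bl i h") auto
  then show ?case using Cons by simp
qed

lemma bw_len: "(\<forall>h\<in>set \<tau>. length (bl i h) \<le> 1) \<Longrightarrow> length (bw i \<tau>) \<le> length \<tau>"
  by (induction \<tau>) force+

locale wsetup =
  fixes S :: "(nat \<times> nat) set" and k :: nat and nX nA nY nB :: "nat \<Rightarrow> nat"
    and P :: "nat \<Rightarrow> nat \<Rightarrow> nat \<Rightarrow> nat \<Rightarrow> nat \<Rightarrow> real"
    and nX' nA' nY' nB' :: nat
    and nxtA nxtB :: "nat \<Rightarrow> hist \<Rightarrow> (nat \<times> nat) option"
    and outA outB :: "nat \<Rightarrow> hist \<Rightarrow> nat"
    and Lf :: "nat \<Rightarrow> word \<Rightarrow> real"
  assumes containsA: "\<exists>(m, n)\<in>S. 1 \<le> m" and containsB: "\<exists>(m, n)\<in>S. 1 \<le> n"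
    and boxes: "\<forall>i<k. is_box (nX i) (nA i) (nY i) (nB i) (P i)"
    and L1: "\<forall>i<k. Lf i ([], []) = 1"
    and Lpos: "\<forall>i<k. \<forall>W c. finite W \<and> W \<subseteq> Oset S (nX i) (nA i) (nY i) (nB i) \<longrightarrow>
                 0 \<le> (\<Sum>u\<in>W. \<Sum>v\<in>W. c u * c v * evL (Lf i) (wmult u (wadj v)))"
    and LP: "\<forall>i<k. \<forall>a<nA i. \<forall>b<nB i. \<forall>x<nX i. \<forall>y<nY i. P i a b x y = evL (Lf i) ([(x, a)], [(y, b)])"
    and wA: "wiring_wf k nX nX' nA' nxtA outA" and wB: "wiring_wf k nY nY' nB' nxtB outB"
begin

sublocale A: party k nX nX' nA' nA nxtA outA by unfold_locales (rule wA)
sublocale B: party k nY nY' nB' nB nxtB outB by unfold_locales (rule wB)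

definition LS where "LS i = LSf (Lf i)"

definition ExpW :: "word \<Rightarrow> real" where
  "ExpW w = (\<Sum>\<tau>A\<in>Tset nA nxtA outA (fst w). \<Sum>\<tau>B\<in>Tset nB nxtB outB (snd w).
      \<Prod>i<k. evL (LS i) (bw i \<tau>A, bw i \<tau>B))"

definition inR :: "word \<Rightarrow> bool" where
  "inR w \<longleftrightarrow> (\<forall>p\<in>set (fst w). fst p < nX') \<and> (\<forall>p\<in>set (snd w). fst p < nY')"

lemma evL_zeroA: "\<not> adjok x \<Longrightarrow> evL L (x, y) = 0"
  by (simp add: evL_def red_word_char)
lemma evL_zeroB: "\<not> adjok y \<Longrightarrow> evL L (x, y) = 0"
  by (simp add: evL_def red_word_char)
lemma evL_redA: "red x = red x' \<Longrightarrow> evL L (x, y) = evL L (x', y)"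
  by (simp add: evL_def red_word_def)
lemma evL_redB: "red y = red y' \<Longrightarrow> evL L (x, y) = evL L (x, y')"
  by (simp add: evL_def red_word_def)

lemma goodA: "A.goodF (\<lambda>ws. \<Sum>\<tau>B\<in>Tset nB nxtB outB b. \<Prod>i<k. evL (LS i) (ws i, bw i \<tau>B))"
  unfolding A.goodF_def
proof (intro conjI allI impI)
  fix ws :: "nat \<Rightarrow> (nat \<times> nat) list" assume "\<exists>i<k. \<not> adjok (ws i)"
  then obtain i where i: "i < k" "\<not> adjok (ws i)" by blast
  show "(\<Sum>\<tau>B\<in>Tset nB nxtB outB b. \<Prod>i<k. evL (LS i) (ws i, bw i \<tau>B)) = 0"
    by (intro sum.neutral ballI prod_zero) (use i evL_zeroA in auto)
next
  fix ws ws' :: "nat \<Rightarrow> (nat \<times> nat) list" assume "\<forall>i<k. red (ws i) = red (ws' i)"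
  then show "(\<Sum>\<tau>B\<in>Tset nB nxtB outB b. \<Prod>i<k. evL (LS i) (ws i, bw i \<tau>B)) = (\<Sum>\<tau>B\<in>Tset nB nxtB outB b. \<Prod>i<k. evL (LS i) (ws' i, bw i \<tau>B))"
    by (intro sum.cong refl prod.cong) (auto intro: evL_redA)
qed

lemma goodB: "B.goodF (\<lambda>ws. \<Sum>\<tau>A\<in>Tset nA nxtA outA a. \<Prod>i<k. evL (LS i) (bw i \<tau>A, ws i))"
  unfolding B.goodF_def
proof (intro conjI allI impI)
  fix ws :: "nat \<Rightarrow> (nat \<times> nat) list" assume "\<exists>i<k. \<not> adjok (ws i)"
  then obtain i where i: "i < k" "\<not> adjok (ws i)" by blast
  show "(\<Sum>\<tau>A\<in>Tset nA nxtA outA a. \<Prod>i<k. evL (LS i) (bw i \<tau>A, ws i)) = 0"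
    by (intro sum.neutral ballI prod_zero) (use i evL_zeroB in auto)
next
  fix ws ws' :: "nat \<Rightarrow> (nat \<times> nat) list" assume "\<forall>i<k. red (ws i) = red (ws' i)"
  then show "(\<Sum>\<tau>A\<in>Tset nA nxtA outA a. \<Prod>i<k. evL (LS i) (bw i \<tau>A, ws i)) = (\<Sum>\<tau>A\<in>Tset nA nxtA outA a. \<Prod>i<k. evL (LS i) (bw i \<tau>A, ws' i))"
    by (intro sum.cong refl prod.cong) (auto intro: evL_redB)
qed

lemma ExpW_A: "ExpW (a, b) = (\<Sum>\<tau>A\<in>Tset nA nxtA outA a. (\<lambda>ws. \<Sum>\<tau>B\<in>Tset nB nxtB outB b. \<Prod>i<k. evL (LS i) (ws i, bw i \<tau>B)) (\<lambda>i. bw i \<tau>A))"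
  unfolding ExpW_def by simp

lemma ExpW_B: "ExpW (a, b) = (\<Sum>\<tau>B\<in>Tset nB nxtB outB b. (\<lambda>ws. \<Sum>\<tau>A\<in>Tset nA nxtA outA a. \<Prod>i<k. evL (LS i) (bw i \<tau>A, ws i)) (\<lambda>i. bw i \<tau>B))"
  unfolding ExpW_def by (simp add: sum.swap[of _ "Tset nA nxtA outA a"])

lemma ExpW_red:
  assumes "inR w"
  shows "evL ExpW w = ExpW w"
proof -
  obtain a b where w: "w = (a, b)" by (cases w)
  have ra: "\<forall>p\<in>set a. fst p < nX'" and rb: "\<forall>p\<in>set b. fst p < nY'" using assms w unfolding inR_def by auto
  show ?thesis
  proof (cases "adjok a \<and> adjok b")
    case True
    have "ExpW (a, b) = ExpW (remdups_adj a, b)"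
      unfolding ExpW_A by (rule A.S_remdups[OF goodA ra])
    also have "\<dots> = ExpW (remdups_adj a, remdups_adj b)"
      unfolding ExpW_B by (rule B.S_remdups[OF goodB rb])
    finally show ?thesis using True w by (simp add: evL_def red_word_char)
  next
    case False
    have "ExpW (a, b) = 0"
    proof (cases "adjok a")
      case False
      show ?thesis unfolding ExpW_A by (rule A.S_zero[OF goodA ra False])
    next
      case True
      then have "\<not> adjok b" using \<open>\<not> (adjok a \<and> adjok b)\<close> by simp
      then show ?thesis unfolding ExpW_B by (rule B.S_zero[OF goodB rb])
    qed
    then show ?thesis using False w by (auto simp: evL_def red_word_char)
  qed
qed

lemma LS_unit: "i < k \<Longrightarrow> evL (LS i) ([], []) = 1"
  using L1 by (simp add: LS_def LSf_def evL_def red_word_def wadj_def)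

lemma ExpW_unit: "ExpW ([], []) = 1"
  unfolding ExpW_def by (simp add: Tset_def LS_unit)

end


context wsetup begin

abbreviation "TA \<equiv> Tset nA nxtA outA"
abbreviation "TB \<equiv> Tset nB nxtB outB"

lemma Oset_inR: "u \<in> Oset S nX' nA' nY' nB' \<Longrightarrow> inR u"
  unfolding Oset_def AmBn_def inR_def by auto

lemma inR_wmult: "inR u \<Longrightarrow> inR v \<Longrightarrow> inR (wmult u (wadj v))"
  unfolding inR_def wmult_def wadj_def by auto

lemma sum_rev_A:
  assumes "\<forall>p\<in>set xs. fst p < nX'"
  shows "(\<Sum>\<tau>\<in>TA (rev xs). G \<tau>) = (\<Sum>\<tau>\<in>TA xs. (G (rev \<tau>) :: real))"
  unfolding A.Tset_rev by (subst sum.reindex) (auto simp: inj_on_def)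

lemma sum_rev_B:
  assumes "\<forall>p\<in>set xs. fst p < nY'"
  shows "(\<Sum>\<tau>\<in>TB (rev xs). G \<tau>) = (\<Sum>\<tau>\<in>TB xs. (G (rev \<tau>) :: real))"
  unfolding B.Tset_rev by (subst sum.reindex) (auto simp: inj_on_def)

definition Mt where
  "Mt a1 b1 a2 b2 = (\<Prod>i<k. evL (LS i) (wmult (bw i a1, bw i b1) (wadj (bw i a2, bw i b2))))"

lemma ExpW_mult:
  assumes u: "inR u" and v: "inR v"
  shows "ExpW (wmult u (wadj v)) = (\<Sum>a1\<in>TA (fst u). \<Sum>a2\<in>TA (fst v). \<Sum>b1\<in>TB (snd u). \<Sum>b2\<in>TB (snd v). Mt a1 b1 a2 b2)"
proof -
  have ua: "\<forall>p\<in>set (fst u). fst p < nX'" and ub: "\<forall>p\<in>set (snd u). fst p < nY'"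
    and va: "\<forall>p\<in>set (fst v). fst p < nX'" and vb: "\<forall>p\<in>set (snd v). fst p < nY'"
    using u v unfolding inR_def by auto
  have bwA: "bw i (rev a2) = rev (bw i a2)" if "a2 \<in> TA (fst v)" for i a2
    using bw_rev[of a2 i] A.Tset_bl_len[OF va that] by simp
  have bwB: "bw i (rev b2) = rev (bw i b2)" if "b2 \<in> TB (snd v)" for i b2
    using bw_rev[of b2 i] B.Tset_bl_len[OF vb that] by simp
  have "ExpW (wmult u (wadj v)) = (\<Sum>\<tau>A\<in>TA (fst u @ rev (fst v)). \<Sum>\<tau>B\<in>TB (snd u @ rev (snd v)).
      \<Prod>i<k. evL (LS i) (bw i \<tau>A, bw i \<tau>B))"
    unfolding ExpW_def by (simp add: wmult_def wadj_def)
  also have "\<dots> = (\<Sum>a1\<in>TA (fst u). \<Sum>a2'\<in>TA (rev (fst v)). \<Sum>\<tau>B\<in>TB (snd u @ rev (snd v)).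
      \<Prod>i<k. evL (LS i) (bw i (a1 @ a2'), bw i \<tau>B))"
    by (rule A.sum_Tset_append) (use ua va in auto)
  also have "\<dots> = (\<Sum>a1\<in>TA (fst u). \<Sum>a2\<in>TA (fst v). \<Sum>\<tau>B\<in>TB (snd u @ rev (snd v)).
      \<Prod>i<k. evL (LS i) (bw i (a1 @ rev a2), bw i \<tau>B))"
    by (intro sum.cong refl sum_rev_A va)
  also have "\<dots> = (\<Sum>a1\<in>TA (fst u). \<Sum>a2\<in>TA (fst v). \<Sum>b1\<in>TB (snd u). \<Sum>b2'\<in>TB (rev (snd v)).
      \<Prod>i<k. evL (LS i) (bw i (a1 @ rev a2), bw i (b1 @ b2')))"
    by (intro sum.cong refl B.sum_Tset_append) (use ub vb in auto)
  also have "\<dots> = (\<Sum>a1\<in>TA (fst u). \<Sum>a2\<in>TA (fst v). \<Sum>b1\<in>TB (snd u). \<Sum>b2\<in>TB (snd v).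
      \<Prod>i<k. evL (LS i) (bw i (a1 @ rev a2), bw i (b1 @ rev b2)))"
    by (intro sum.cong refl sum_rev_B vb)
  also have "\<dots> = (\<Sum>a1\<in>TA (fst u). \<Sum>a2\<in>TA (fst v). \<Sum>b1\<in>TB (snd u). \<Sum>b2\<in>TB (snd v). Mt a1 b1 a2 b2)"
    unfolding Mt_def
    by (intro sum.cong refl prod.cong) (simp add: bwA bwB wmult_def wadj_def)
  finally show ?thesis .
qed

lemma finite_TA: "\<forall>p\<in>set xs. fst p < nX' \<Longrightarrow> finite (TA xs)" by (rule A.finite_Tset)
lemma finite_TB: "\<forall>p\<in>set xs. fst p < nY' \<Longrightarrow> finite (TB xs)" by (rule B.finite_Tset)

lemma LS_psd:
  assumes i: "i < k" and fin: "finite J" and sub: "g ` J \<subseteq> Oset S (nX i) (nA i) (nY i) (nB i)"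
  shows "psdk J (\<lambda>j j'. evL (LS i) (wmult (g j) (wadj (g j'))))"
  unfolding LS_def
  by (rule box_kernel[OF LSf_pos fin sub]) (use Lpos i in blast)

lemma LS_sym: "symk J (\<lambda>j j'. evL (LS i) (wmult (g j) (wadj (g j'))))"
  unfolding symk_def LS_def
  by (metis evL_LSf_wadj wadj_wmult)

lemma g_Oset:
  assumes uO: "u \<in> Oset S nX' nA' nY' nB'" and a: "a \<in> TA (fst u)" and b: "b \<in> TB (snd u)" and i: "i < k"
  shows "(bw i a, bw i b) \<in> Oset S (nX i) (nA i) (nY i) (nB i)"
proof -
  obtain m n where mn: "(m, n) \<in> S" and uA: "u \<in> AmBn m n nX' nA' nY' nB'"
    using uO unfolding Oset_def by blast
  have ua: "\<forall>p\<in>set (fst u). fst p < nX'" and ub: "\<forall>p\<in>set (snd u). fst p < nY'"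
    using uA unfolding AmBn_def by auto
  have la: "length (bw i a) \<le> length (fst u)"
    using bw_len[of a i] A.Tset_bl_len[OF ua a] A.Tset_length[OF a] by simp
  have lb: "length (bw i b) \<le> length (snd u)"
    using bw_len[of b i] B.Tset_bl_len[OF ub b] B.Tset_length[OF b] by simp
  have sa: "set (bw i a) \<subseteq> {0..<nX i} \<times> {0..<nA i}"
    using A.Tset_bl_range[OF ua a _ i] by (auto simp: bw_def)
  have sb: "set (bw i b) \<subseteq> {0..<nY i} \<times> {0..<nB i}"
    using B.Tset_bl_range[OF ub b _ i] by (auto simp: bw_def)
  have "(bw i a, bw i b) \<in> AmBn m n (nX i) (nA i) (nY i) (nB i)"
    using la lb sa sb uA unfolding AmBn_def by auto
  then show ?thesis using mn unfolding Oset_def by blast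
qed

lemma ExpW_pos:
  assumes finW: "finite W" and WO: "W \<subseteq> Oset S nX' nA' nY' nB'"
  shows "0 \<le> (\<Sum>u\<in>W. \<Sum>v\<in>W. c u * c v * evL ExpW (wmult u (wadj v)))"
proof -
  define J where "J = Sigma W (\<lambda>u. TA (fst u) \<times> TB (snd u))"
  define g where "g i j = (bw i (fst (snd j)), bw i (snd (snd j)))" for i and j :: "word \<times> hist list \<times> hist list"
  define K where "K i j j' = evL (LS i) (wmult (g i j) (wadj (g i j')))" for i j j'
  have inRW: "\<And>u. u \<in> W \<Longrightarrow> inR u" using WO Oset_inR by blast
  have finT: "finite (TA (fst u) \<times> TB (snd u))" if "u \<in> W" for u
    using inRW[OF that] finite_TA finite_TB unfolding inR_def by auto
  have finJ: "finite J" unfolding J_def using finW finT by auto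
  have sumJ: "(\<Sum>j\<in>J. f j) = (\<Sum>u\<in>W. \<Sum>a\<in>TA (fst u). \<Sum>b\<in>TB (snd u). (f (u, (a, b)) :: real))" for f
  proof -
    have "(\<Sum>j\<in>J. f j) = (\<Sum>u\<in>W. \<Sum>p\<in>TA (fst u) \<times> TB (snd u). f (u, p))"
      unfolding J_def using finW finT by (subst sum.Sigma) auto
    also have "\<dots> = (\<Sum>u\<in>W. \<Sum>a\<in>TA (fst u). \<Sum>b\<in>TB (snd u). f (u, (a, b)))"
      by (intro sum.cong refl) (simp add: sum.cartesian_product)
    finally show ?thesis .
  qed
  have psd: "\<forall>i<k. psdk J (K i) \<and> symk J (K i)"
  proof (intro allI impI conjI)
    fix i assume i: "i < k"
    have "g i ` J \<subseteq> Oset S (nX i) (nA i) (nY i) (nB i)"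
      using g_Oset[OF _ _ _ i] WO unfolding J_def g_def by auto
    then show "psdk J (K i)" unfolding K_def by (rule LS_psd[OF i finJ])
    show "symk J (K i)" unfolding K_def by (rule LS_sym)
  qed
  have P: "psdk J (\<lambda>j j'. \<Prod>i<k. K i j j')" by (rule psdk_prod[OF finJ psd])
  have nn: "0 \<le> (\<Sum>j\<in>J. \<Sum>j'\<in>J. c (fst j) * c (fst j') * (\<Prod>i<k. K i j j'))"
    by (rule psdkD[OF P])
  define Phi where "Phi u a1 b1 v a2 b2 = c u * c v * Mt a1 b1 a2 b2" for u a1 b1 v a2 b2
  have R: "(\<Sum>j\<in>J. \<Sum>j'\<in>J. c (fst j) * c (fst j') * (\<Prod>i<k. K i j j'))
     = (\<Sum>u\<in>W. \<Sum>a1\<in>TA (fst u). \<Sum>b1\<in>TB (snd u). \<Sum>v\<in>W. \<Sum>a2\<in>TA (fst v). \<Sum>b2\<in>TB (snd v). Phi u a1 b1 v a2 b2)"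
    unfolding sumJ Phi_def Mt_def K_def g_def by simp
  have Lq: "(\<Sum>u\<in>W. \<Sum>v\<in>W. c u * c v * evL ExpW (wmult u (wadj v)))
     = (\<Sum>u\<in>W. \<Sum>v\<in>W. \<Sum>a1\<in>TA (fst u). \<Sum>a2\<in>TA (fst v). \<Sum>b1\<in>TB (snd u). \<Sum>b2\<in>TB (snd v). Phi u a1 b1 v a2 b2)"
  proof (intro sum.cong refl)
    fix u v assume u: "u \<in> W" and v: "v \<in> W"
    have "evL ExpW (wmult u (wadj v)) = ExpW (wmult u (wadj v))"
      by (rule ExpW_red[OF inR_wmult[OF inRW[OF u] inRW[OF v]]])
    then show "c u * c v * evL ExpW (wmult u (wadj v)) = (\<Sum>a1\<in>TA (fst u). \<Sum>a2\<in>TA (fst v). \<Sum>b1\<in>TB (snd u). \<Sum>b2\<in>TB (snd v). Phi u a1 b1 v a2 b2)"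
      unfolding ExpW_mult[OF inRW[OF u] inRW[OF v]] Phi_def by (simp add: sum_distrib_left)
  qed
  have swap: "(\<Sum>v\<in>W. \<Sum>a1\<in>TA (fst u). \<Sum>a2\<in>TA (fst v). \<Sum>b1\<in>TB (snd u). \<Sum>b2\<in>TB (snd v). Phi u a1 b1 v a2 b2)
     = (\<Sum>a1\<in>TA (fst u). \<Sum>b1\<in>TB (snd u). \<Sum>v\<in>W. \<Sum>a2\<in>TA (fst v). \<Sum>b2\<in>TB (snd v). Phi u a1 b1 v a2 b2)" for u
  proof -
    have "(\<Sum>v\<in>W. \<Sum>a1\<in>TA (fst u). \<Sum>a2\<in>TA (fst v). \<Sum>b1\<in>TB (snd u). \<Sum>b2\<in>TB (snd v). Phi u a1 b1 v a2 b2)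
       = (\<Sum>a1\<in>TA (fst u). \<Sum>v\<in>W. \<Sum>a2\<in>TA (fst v). \<Sum>b1\<in>TB (snd u). \<Sum>b2\<in>TB (snd v). Phi u a1 b1 v a2 b2)"
      by (rule sum.swap)
    also have "\<dots> = (\<Sum>a1\<in>TA (fst u). \<Sum>v\<in>W. \<Sum>b1\<in>TB (snd u). \<Sum>a2\<in>TA (fst v). \<Sum>b2\<in>TB (snd v). Phi u a1 b1 v a2 b2)"
      by (intro sum.cong refl sum.swap)
    also have "\<dots> = (\<Sum>a1\<in>TA (fst u). \<Sum>b1\<in>TB (snd u). \<Sum>v\<in>W. \<Sum>a2\<in>TA (fst v). \<Sum>b2\<in>TB (snd v). Phi u a1 b1 v a2 b2)"
      by (intro sum.cong refl sum.swap)
    finally show ?thesis .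
  qed
  have "(\<Sum>u\<in>W. \<Sum>v\<in>W. c u * c v * evL ExpW (wmult u (wadj v)))
     = (\<Sum>j\<in>J. \<Sum>j'\<in>J. c (fst j) * c (fst j') * (\<Prod>i<k. K i j j'))"
    unfolding Lq R swap ..
  then show ?thesis using nn by simp
qed

end


lemma sum_if2:
  assumes "finite A" "finite B"
  shows "(\<Sum>x\<in>A. \<Sum>y\<in>B. if P x \<and> Q y then f x y else 0) = (\<Sum>x\<in>{x\<in>A. P x}. \<Sum>y\<in>{y\<in>B. Q y}. (f x y :: real))"
proof -
  have iA: "(\<Sum>x\<in>{x\<in>A. P x}. G x) = (\<Sum>x\<in>A. if P x then G x else 0)" for G :: "_ \<Rightarrow> real"
    by (rule sum.inter_filter[OF assms(1)])
  have iB: "(\<Sum>y\<in>{y\<in>B. Q y}. G y) = (\<Sum>y\<in>B. if Q y then G y else 0)" for G :: "_ \<Rightarrow> real"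
    by (rule sum.inter_filter[OF assms(2)])
  show ?thesis unfolding iA iB
  proof (intro sum.cong refl)
    fix x show "(\<Sum>y\<in>B. if P x \<and> Q y then f x y else 0) = (if P x then \<Sum>y\<in>B. if Q y then f x y else 0 else 0)"
      by (cases "P x") simp_all
  qed
qed

lemma sum_delta_condA: fixes c n :: nat shows "c < n \<Longrightarrow> (\<Sum>a<n. if c = a \<and> Q then T else 0) = (if Q then T else (0::real))"
  by (cases Q) (simp_all add: sum.delta')

lemma sum_delta_condB: fixes c n :: nat shows "c < n \<Longrightarrow> (\<Sum>b<n. if P \<and> c = b then T else 0) = (if P then T else (0::real))"
  by (cases P) (simp_all add: sum.delta')

context wsetup begin

lemma memO_marg:
  assumes i: "i < k" and x: "x < nX i" and y: "y < nY i"
  shows "gm x y ` Jm (nA i) (nB i) \<subseteq> Oset S (nX i) (nA i) (nY i) (nB i)"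
proof -
  obtain m1 n1 where m1: "(m1, n1) \<in> S" "1 \<le> m1" using containsA by blast
  obtain m2 n2 where m2: "(m2, n2) \<in> S" "1 \<le> n2" using containsB by blast
  have "([], []) \<in> AmBn m1 n1 (nX i) (nA i) (nY i) (nB i)" unfolding AmBn_def by simp
  moreover have "([(x, a)], []) \<in> AmBn m1 n1 (nX i) (nA i) (nY i) (nB i)" if "a < nA i" for a
    using m1 x that unfolding AmBn_def by simp
  moreover have "([], [(y, b)]) \<in> AmBn m2 n2 (nX i) (nA i) (nY i) (nB i)" if "b < nB i" for b
    using m2 y that unfolding AmBn_def by simp
  ultimately show ?thesis using m1 m2 unfolding Oset_def Jm_def gm_def by fastforce
qed

lemma marg:
  assumes i: "i < k" and x: "x < nX i" and y: "y < nY i"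
  shows "(\<forall>a<nA i. evL (Lf i) ([(x, a)], []) = (\<Sum>b<nB i. P i a b x y)) \<and> (\<forall>b<nB i. evL (Lf i) ([], [(y, b)]) = (\<Sum>a<nA i. P i a b x y))"
proof (rule box_marg[OF _ _ _ _ x y memO_marg[OF i x y]])
  show "is_box (nX i) (nA i) (nY i) (nB i) (P i)" using boxes i by blast
  show "Lf i ([], []) = 1" using L1 i by blast
  show "\<forall>W c. finite W \<and> W \<subseteq> Oset S (nX i) (nA i) (nY i) (nB i) \<longrightarrow> 0 \<le> (\<Sum>u\<in>W. \<Sum>v\<in>W. c u * c v * evL (Lf i) (wmult u (wadj v)))"
    using Lpos i by blast
  show "\<forall>a<nA i. \<forall>b<nB i. \<forall>x<nX i. \<forall>y<nY i. P i a b x y = evL (Lf i) ([(x, a)], [(y, b)])"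
    using LP i by blast
qed

definition wl :: "(nat \<times> nat) option \<Rightarrow> (nat \<times> nat) list" where
  "wl e = (case e of None \<Rightarrow> [] | Some p \<Rightarrow> [p])"

lemma LS_bfo:
  assumes i: "i < k" and eA: "ok (nX i) (nA i) eA" and eB: "ok (nY i) (nB i) eB"
  shows "evL (LS i) (wl eA, wl eB) = bfo nA nB P i eA eB"
proof -
  have box: "is_box (nX i) (nA i) (nY i) (nB i) (P i)" using boxes i by blast
  have p: "0 < nX i" "0 < nY i" using is_box_pos[OF box] by auto
  have self: "wadj (wl eA, wl eB) = (wl eA, wl eB)" unfolding wadj_def wl_def by (auto split: option.splits)
  have "evL (LS i) (wl eA, wl eB) = evL (Lf i) (wl eA, wl eB)"
    unfolding LS_def using wadj_single[OF self] .
  also have "\<dots> = bfo nA nB P i eA eB"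
  proof (cases eA)
    case None
    show ?thesis
    proof (cases eB)
      case None2: None
      then show ?thesis using None L1 i by (simp add: wl_def bfo_def evL_def red_word_def)
    next
      case (Some e) then obtain y b where e: "e = (y, b)" by (cases e)
      then have yb: "y < nY i" "b < nB i" using eB Some unfolding ok_def by auto
      have "evL (Lf i) ([], [(y, b)]) = (\<Sum>a<nA i. P i a b 0 y)" using marg[OF i p(1) yb(1)] yb(2) by blast
      then show ?thesis using None Some e by (simp add: wl_def bfo_def)
    qed
  next
    case (Some e') then obtain x a where e': "e' = (x, a)" by (cases e')
    then have xa: "x < nX i" "a < nA i" using eA Some unfolding ok_def by auto
    show ?thesis
    proof (cases eB)
      case None
      have "evL (Lf i) ([(x, a)], []) = (\<Sum>b<nB i. P i a b x 0)" using marg[OF i xa(1) p(2)] xa(2) by blast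
      then show ?thesis using None Some e' by (simp add: wl_def bfo_def)
    next
      case Some2: (Some e) then obtain y b where e: "e = (y, b)" by (cases e)
      then have yb: "y < nY i" "b < nB i" using eB Some2 unfolding ok_def by auto
      have "P i a b x y = evL (Lf i) ([(x, a)], [(y, b)])" using LP i xa yb by blast
      then show ?thesis using Some e' Some2 e by (simp add: wl_def bfo_def)
    qed
  qed
  finally show ?thesis .
qed

lemma okA: "chi < nX' \<Longrightarrow> complete_hist nA nxtA chi h \<Longrightarrow> i < k \<Longrightarrow> ok (nX i) (nA i) (map_of h i)"
  using A.reach_props[of chi h] unfolding ok_def complete_reach
  by (auto split: option.splits dest!: map_of_SomeD)

lemma okB: "chi < nY' \<Longrightarrow> complete_hist nB nxtB chi h \<Longrightarrow> i < k \<Longrightarrow> ok (nY i) (nB i) (map_of h i)"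
  using B.reach_props[of chi h] unfolding ok_def complete_reach
  by (auto split: option.splits dest!: map_of_SomeD)

lemma blA: "chi < nX' \<Longrightarrow> complete_hist nA nxtA chi h \<Longrightarrow> bl i h = wl (map_of h i)"
  using A.reach_props[of chi h] bl_map_of[of h i] unfolding complete_reach wl_def by auto

lemma blB: "chi < nY' \<Longrightarrow> complete_hist nB nxtB chi h \<Longrightarrow> bl i h = wl (map_of h i)"
  using B.reach_props[of chi h] bl_map_of[of h i] unfolding complete_reach wl_def by auto

lemma term_eq:
  assumes x: "x < nX'" and y: "y < nY'" and hA: "complete_hist nA nxtA x hA" and hB: "complete_hist nB nxtB y hB"
  shows "(\<Prod>i<k. evL (LS i) (bl i hA, bl i hB)) = (\<Prod>i<k. box_factor nA nB P hA hB i)"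
  by (intro prod.cong refl)
     (simp add: blA[OF x hA] blB[OF y hB] box_factor_bfo LS_bfo okA[OF x hA] okB[OF y hB])

lemma ExpW_single:
  "ExpW ([(x, a)], [(y, b)]) = (\<Sum>hA\<in>A.Cs (x, a). \<Sum>hB\<in>B.Cs (y, b). \<Prod>i<k. evL (LS i) (bl i hA, bl i hB))"
  unfolding ExpW_def by (simp add: A.sum_Tset_Cons B.sum_Tset_Cons A.Tset_Nil B.Tset_Nil)

lemma wired_eq:
  assumes x: "x < nX'" and y: "y < nY'"
  shows "wired_box k nA nB P nxtA outA nxtB outB a b x y = evL ExpW ([(x, a)], [(y, b)])"
proof -
  have "evL ExpW ([(x, a)], [(y, b)]) = ExpW ([(x, a)], [(y, b)])"
    by (rule ExpW_red) (simp add: inR_def x y)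
  also have "\<dots> = (\<Sum>hA\<in>A.Cs (x, a). \<Sum>hB\<in>B.Cs (y, b). \<Prod>i<k. box_factor nA nB P hA hB i)"
    unfolding ExpW_single
    by (intro sum.cong refl term_eq[OF x y]) (auto simp: A.Cs_def B.Cs_def)
  also have "\<dots> = wired_box k nA nB P nxtA outA nxtB outB a b x y"
  proof -
    have "A.Cs (x, a) = {h \<in> {h. complete_hist nA nxtA x h}. outA x h = a}" unfolding A.Cs_def by auto
    moreover have "B.Cs (y, b) = {h \<in> {h. complete_hist nB nxtB y h}. outB y h = b}" unfolding B.Cs_def by auto
    ultimately show ?thesis
      unfolding wired_box_def
      using sum_if2[OF A.finite_complete[OF x] B.finite_complete[OF y], of "\<lambda>h. outA x h = a" "\<lambda>h. outB y h = b"]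
      by simp
  qed
  finally show ?thesis by simp
qed

end


context wsetup begin

lemma bf_eq: "box_factor nA nB P hA hB i = bfo nA nB P i (map_of hA i) (map_of hB i)"
  by (rule box_factor_bfo)

lemma wired_nonneg:
  assumes x: "x < nX'" and y: "y < nY'"
  shows "0 \<le> wired_box k nA nB P nxtA outA nxtB outB a b x y"
  unfolding wired_box_def
proof (intro sum_nonneg ballI)
  fix hA hB assume hA: "hA \<in> {h. complete_hist nA nxtA x h}" and hB: "hB \<in> {h. complete_hist nB nxtB y h}"
  have "0 \<le> (\<Prod>i<k. box_factor nA nB P hA hB i)"
  proof (intro prod_nonneg ballI)
    fix i assume "i \<in> {..<k}"
    then have i: "i < k" by simp
    show "0 \<le> box_factor nA nB P hA hB i"
      unfolding bf_eq using boxes i okA[OF x _ i] okB[OF y _ i] hA hB by (intro bfo_nonneg) auto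
  qed
  then show "0 \<le> (if outA x hA = a \<and> outB y hB = b then \<Prod>i<k. box_factor nA nB P hA hB i else 0)" by simp
qed

lemma wired_margA:
  assumes x: "x < nX'" and y: "y < nY'"
  shows "(\<Sum>b<nB'. wired_box k nA nB P nxtA outA nxtB outB a b x y)
    = (\<Sum>hA\<in>{h. complete_hist nA nxtA x h}. if outA x hA = a then \<Prod>i<k. bfo nA nB P i (map_of hA i) None else 0)"
proof -
  let ?T = "\<lambda>hA hB. \<Prod>i<k. bfo nA nB P i (map_of hA i) (map_of hB i)"
  have "(\<Sum>b<nB'. wired_box k nA nB P nxtA outA nxtB outB a b x y)
     = (\<Sum>b<nB'. \<Sum>hA\<in>{h. complete_hist nA nxtA x h}. \<Sum>hB\<in>{h. complete_hist nB nxtB y h}. if outA x hA = a \<and> outB y hB = b then ?T hA hB else 0)"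
    unfolding wired_box_def bf_eq ..
  also have "\<dots> = (\<Sum>hA\<in>{h. complete_hist nA nxtA x h}. \<Sum>b<nB'. \<Sum>hB\<in>{h. complete_hist nB nxtB y h}. if outA x hA = a \<and> outB y hB = b then ?T hA hB else 0)"
    by (rule sum.swap)
  also have "\<dots> = (\<Sum>hA\<in>{h. complete_hist nA nxtA x h}. \<Sum>hB\<in>{h. complete_hist nB nxtB y h}. \<Sum>b<nB'. if outA x hA = a \<and> outB y hB = b then ?T hA hB else 0)"
    by (intro sum.cong refl sum.swap)
  also have "\<dots> = (\<Sum>hA\<in>{h. complete_hist nA nxtA x h}. \<Sum>hB\<in>{h. complete_hist nB nxtB y h}. if outA x hA = a then ?T hA hB else 0)"
    by (intro sum.cong refl sum_delta_condB B.out_wf y)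
  also have "\<dots> = (\<Sum>hA\<in>{h. complete_hist nA nxtA x h}. if outA x hA = a then (\<Sum>hB\<in>{h. complete_hist nB nxtB y h}. ?T hA hB) else 0)"
    by (intro sum.cong refl) simp
  also have "\<dots> = (\<Sum>hA\<in>{h. complete_hist nA nxtA x h}. if outA x hA = a then \<Prod>i<k. bfo nA nB P i (map_of hA i) None else 0)"
  proof (intro sum.cong refl)
    fix hA assume hA: "hA \<in> {h. complete_hist nA nxtA x h}"
    have "(\<Sum>hB\<in>{h. complete_hist nB nxtB y h}. ?T hA hB) = (\<Prod>i<k. bfo nA nB P i (map_of hA i) None)"
    proof (rule B.tree_sum0[OF y])
      show "\<forall>i<k. \<forall>ya<nY i. (\<Sum>ba<nB i. bfo nA nB P i (map_of hA i) (Some (ya, ba))) = bfo nA nB P i (map_of hA i) None"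
        using boxes okA[OF x] hA by (auto intro!: bfo_sumB)
    qed
    then show "(if outA x hA = a then \<Sum>hB\<in>{h. complete_hist nB nxtB y h}. ?T hA hB else 0) = (if outA x hA = a then \<Prod>i<k. bfo nA nB P i (map_of hA i) None else 0)"
      by simp
  qed
  finally show ?thesis .
qed

lemma wired_margB:
  assumes x: "x < nX'" and y: "y < nY'"
  shows "(\<Sum>a<nA'. wired_box k nA nB P nxtA outA nxtB outB a b x y)
    = (\<Sum>hB\<in>{h. complete_hist nB nxtB y h}. if outB y hB = b then \<Prod>i<k. bfo nA nB P i None (map_of hB i) else 0)"
proof -
  let ?T = "\<lambda>hA hB. \<Prod>i<k. bfo nA nB P i (map_of hA i) (map_of hB i)"
  have "(\<Sum>a<nA'. wired_box k nA nB P nxtA outA nxtB outB a b x y)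
     = (\<Sum>a<nA'. \<Sum>hB\<in>{h. complete_hist nB nxtB y h}. \<Sum>hA\<in>{h. complete_hist nA nxtA x h}. if outA x hA = a \<and> outB y hB = b then ?T hA hB else 0)"
    unfolding wired_box_def bf_eq by (intro sum.cong refl sum.swap)
  also have "\<dots> = (\<Sum>hB\<in>{h. complete_hist nB nxtB y h}. \<Sum>a<nA'. \<Sum>hA\<in>{h. complete_hist nA nxtA x h}. if outA x hA = a \<and> outB y hB = b then ?T hA hB else 0)"
    by (rule sum.swap)
  also have "\<dots> = (\<Sum>hB\<in>{h. complete_hist nB nxtB y h}. \<Sum>hA\<in>{h. complete_hist nA nxtA x h}. \<Sum>a<nA'. if outA x hA = a \<and> outB y hB = b then ?T hA hB else 0)"
    by (intro sum.cong refl sum.swap)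
  also have "\<dots> = (\<Sum>hB\<in>{h. complete_hist nB nxtB y h}. \<Sum>hA\<in>{h. complete_hist nA nxtA x h}. if outB y hB = b then ?T hA hB else 0)"
    by (intro sum.cong refl sum_delta_condA A.out_wf x)
  also have "\<dots> = (\<Sum>hB\<in>{h. complete_hist nB nxtB y h}. if outB y hB = b then (\<Sum>hA\<in>{h. complete_hist nA nxtA x h}. ?T hA hB) else 0)"
    by (intro sum.cong refl) simp
  also have "\<dots> = (\<Sum>hB\<in>{h. complete_hist nB nxtB y h}. if outB y hB = b then \<Prod>i<k. bfo nA nB P i None (map_of hB i) else 0)"
  proof (intro sum.cong refl)
    fix hB assume hB: "hB \<in> {h. complete_hist nB nxtB y h}"
    have "(\<Sum>hA\<in>{h. complete_hist nA nxtA x h}. ?T hA hB) = (\<Prod>i<k. bfo nA nB P i None (map_of hB i))"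
    proof (rule A.tree_sum0[OF x, where f = "\<lambda>i e. bfo nA nB P i e (map_of hB i)"])
      show "\<forall>i<k. \<forall>xa<nX i. (\<Sum>aa<nA i. bfo nA nB P i (Some (xa, aa)) (map_of hB i)) = bfo nA nB P i None (map_of hB i)"
        using boxes okB[OF y] hB by (auto intro!: bfo_sumA)
    qed
    then show "(if outB y hB = b then \<Sum>hA\<in>{h. complete_hist nA nxtA x h}. ?T hA hB else 0) = (if outB y hB = b then \<Prod>i<k. bfo nA nB P i None (map_of hB i) else 0)"
      by simp
  qed
  finally show ?thesis .
qed

lemma wired_norm:
  assumes x: "x < nX'" and y: "y < nY'"
  shows "(\<Sum>a<nA'. \<Sum>b<nB'. wired_box k nA nB P nxtA outA nxtB outB a b x y) = 1"
proof -
  have "(\<Sum>a<nA'. \<Sum>b<nB'. wired_box k nA nB P nxtA outA nxtB outB a b x y)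
     = (\<Sum>a<nA'. \<Sum>hA\<in>{h. complete_hist nA nxtA x h}. if outA x hA = a then \<Prod>i<k. bfo nA nB P i (map_of hA i) None else 0)"
    by (intro sum.cong refl wired_margA x y)
  also have "\<dots> = (\<Sum>hA\<in>{h. complete_hist nA nxtA x h}. \<Sum>a<nA'. if outA x hA = a \<and> True then \<Prod>i<k. bfo nA nB P i (map_of hA i) None else 0)"
    by (subst sum.swap) simp
  also have "\<dots> = (\<Sum>hA\<in>{h. complete_hist nA nxtA x h}. \<Prod>i<k. bfo nA nB P i (map_of hA i) None)"
    by (intro sum.cong refl) (subst sum_delta_condA[OF A.out_wf[OF x]], simp)
  also have "\<dots> = (\<Prod>i<k. bfo nA nB P i None None)"
  proof (rule A.tree_sum0[OF x, where f = "\<lambda>i e. bfo nA nB P i e None"])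
    show "\<forall>i<k. \<forall>xa<nX i. (\<Sum>aa<nA i. bfo nA nB P i (Some (xa, aa)) None) = bfo nA nB P i None None"
      using boxes by (auto intro!: bfo_sumA simp: ok_def)
  qed
  also have "\<dots> = 1" by (simp add: bfo_def)
  finally show ?thesis .
qed

lemma wired_is_box:
  assumes "0 < nX'" "0 < nA'" "0 < nY'" "0 < nB'"
  shows "is_box nX' nA' nY' nB' (wired_box k nA nB P nxtA outA nxtB outB)"
  unfolding is_box_def
proof (intro conjI allI impI)
  show "0 < nX'" "0 < nA'" "0 < nY'" "0 < nB'" using assms by auto
  show "0 \<le> wired_box k nA nB P nxtA outA nxtB outB a b x y" if "x < nX'" "y < nY'" for a b x y
    by (rule wired_nonneg) (use that in auto)
  show "(\<Sum>a<nA'. \<Sum>b<nB'. wired_box k nA nB P nxtA outA nxtB outB a b x y) = 1" if "x < nX'" "y < nY'" for x y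
    by (rule wired_norm[OF that])
  show "(\<Sum>b<nB'. wired_box k nA nB P nxtA outA nxtB outB a b x y) = (\<Sum>b<nB'. wired_box k nA nB P nxtA outA nxtB outB a b x y')"
    if "x < nX'" "y < nY'" "y' < nY'" for a x y y'
    using wired_margA[OF that(1,2)] wired_margA[OF that(1,3)] by simp
  show "(\<Sum>a<nA'. wired_box k nA nB P nxtA outA nxtB outB a b x y) = (\<Sum>a<nA'. wired_box k nA nB P nxtA outA nxtB outB a b x' y)"
    if "y < nY'" "x < nX'" "x' < nX'" for b y x x'
    using wired_margB[OF that(2,1)] wired_margB[OF that(3,1)] by simp
qed

end


theorem theorem4:
  fixes S :: "(nat \<times> nat) set"
    and k :: nat
    and nX nA nY nB :: "nat \<Rightarrow> nat"
    and P :: "nat \<Rightarrow> nat \<Rightarrow> nat \<Rightarrow> nat \<Rightarrow> nat \<Rightarrow> real"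
    and nX' nA' nY' nB' :: nat
    and nxtA nxtB :: "nat \<Rightarrow> hist \<Rightarrow> (nat \<times> nat) option"
    and outA outB :: "nat \<Rightarrow> hist \<Rightarrow> nat"
  assumes containsA: "\<exists>(m, n)\<in>S. 1 \<le> m"
    and containsB: "\<exists>(m, n)\<in>S. 1 \<le> n"
    and boxes: "\<forall>i<k. O_positive S (nX i) (nA i) (nY i) (nB i) (P i)"
    and alph: "0 < nX'" "0 < nA'" "0 < nY'" "0 < nB'"
    and wA: "wiring_wf k nX nX' nA' nxtA outA"
    and wB: "wiring_wf k nY nY' nB' nxtB outB"
  shows "O_positive S nX' nA' nY' nB' (wired_box k nA nB P nxtA outA nxtB outB)"
proof -
  have ex: "\<forall>i\<in>{..<k}. \<exists>L :: word \<Rightarrow> real. L ([], []) = 1 \<and>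
        (\<forall>W c. finite W \<and> W \<subseteq> Oset S (nX i) (nA i) (nY i) (nB i) \<longrightarrow>
            0 \<le> (\<Sum>u\<in>W. \<Sum>v\<in>W. c u * c v * evL L (wmult u (wadj v)))) \<and>
        (\<forall>a<nA i. \<forall>b<nB i. \<forall>x<nX i. \<forall>y<nY i. P i a b x y = evL L ([(x, a)], [(y, b)]))"
    using boxes unfolding O_positive_def by simp
  obtain Lf where Lf: "\<forall>i\<in>{..<k}. Lf i ([], []) = 1 \<and>
        (\<forall>W c. finite W \<and> W \<subseteq> Oset S (nX i) (nA i) (nY i) (nB i) \<longrightarrow>
            0 \<le> (\<Sum>u\<in>W. \<Sum>v\<in>W. c u * c v * evL (Lf i) (wmult u (wadj v)))) \<and>
        (\<forall>a<nA i. \<forall>b<nB i. \<forall>x<nX i. \<forall>y<nY i. P i a b x y = evL (Lf i) ([(x, a)], [(y, b)]))"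
    apply (rule exE[OF bchoice[OF ex]])
    apply (rule that)
    apply assumption
    done
  interpret W: wsetup S k nX nA nY nB P nX' nA' nY' nB' nxtA nxtB outA outB Lf
  proof
    show "\<exists>(m, n)\<in>S. 1 \<le> m" by (rule containsA)
    show "\<exists>(m, n)\<in>S. 1 \<le> n" by (rule containsB)
    show "\<forall>i<k. is_box (nX i) (nA i) (nY i) (nB i) (P i)" using boxes unfolding O_positive_def by simp
    show "\<forall>i<k. Lf i ([], []) = 1" using Lf by simp
    show "\<forall>i<k. \<forall>W c. finite W \<and> W \<subseteq> Oset S (nX i) (nA i) (nY i) (nB i) \<longrightarrow>
                 0 \<le> (\<Sum>u\<in>W. \<Sum>v\<in>W. c u * c v * evL (Lf i) (wmult u (wadj v)))" using Lf by simp
    show "\<forall>i<k. \<forall>a<nA i. \<forall>b<nB i. \<forall>x<nX i. \<forall>y<nY i. P i a b x y = evL (Lf i) ([(x, a)], [(y, b)])"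
      using Lf by simp
    show "wiring_wf k nX nX' nA' nxtA outA" by (rule wA)
    show "wiring_wf k nY nY' nB' nxtB outB" by (rule wB)
  qed
  show ?thesis
    unfolding O_positive_def
  proof (intro conjI exI[of _ W.ExpW] allI impI)
    show "is_box nX' nA' nY' nB' (wired_box k nA nB P nxtA outA nxtB outB)"
      by (rule W.wired_is_box[OF alph])
    show "W.ExpW ([], []) = 1" by (rule W.ExpW_unit)
    show "0 \<le> (\<Sum>u\<in>W. \<Sum>v\<in>W. c u * c v * evL W.ExpW (wmult u (wadj v)))"
      if "finite W \<and> W \<subseteq> Oset S nX' nA' nY' nB'" for W c
      by (rule W.ExpW_pos) (use that in auto)
    show "wired_box k nA nB P nxtA outA nxtB outB a b x y = evL W.ExpW ([(x, a)], [(y, b)])"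
      if "a < nA'" "b < nB'" "x < nX'" "y < nY'" for a b x y
      by (rule W.wired_eq) (use that in auto)
  qed
qed


end
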